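(* Let $D\subseteq\mathbb{R}$ be an open interval, let $f:D\to\mathbb{R}$ be a sufficiently differentiable function, and let $\alpha\in D$ be a simple root of $f(x)=0$ (i.e. $f(\alpha)=0$, $f'(\alpha)\neq 0$). Fix $\kappa\in\mathbb{R}$, $\kappa\neq 0$, and let $G(t_1,t_2)$ and $H(s_1,s_2)$ be real-valued functions of two real variables, sufficiently differentiable near $(0,0)$. Consider the iteration, starting from $x_0$, $$ \begin{aligned} w_n &= x_n-\kappa f(x_n),\\ y_n &= x_n-\kappa\,\frac{f(x_n)^2}{f(x_n)-f(w_n)},\\ z_n &= y_n-\kappa\,\frac{f(y_n)\,f(x_n)}{f(x_n)-f(w_n)}\;G(t_1,t_2),\\ x_{n+1} &= z_n-\frac{f(z_n)}{\psi_n}\;H(s_1,s_2), \end{aligned} $$ where $t_1=\frac{f(y_n)}{f(x_n)}$, $t_2=\frac{f(y_n)}{f(w_n)}$, $s_1=\frac{f(z_n)}{f(x_n)}$, $s_2=\frac{f(z_n)}{f(w_n)}$, and $$ \psi_n=\frac{b(b-c)}{(a-b)(a-c)}\,\frac{v_1}{a}+\frac{-3b^2+2bc+2ab-ac}{(a-b)(b-c)}\,\frac{v_2}{b}+\frac{b(b-a)}{(a-c)(b-c)}\,\frac{v_3}{c}, $$ with $v_1=f(x_n)-f(y_n)$, $v_2=f(z_n)-f(y_n)$, $v_3=f(w_n)-f(y_n)$, $a=x_n-y_n$, $b=z_n-y_n$, $c=w_n-y_n$. If $x_0$ is chosen sufficiently close to $\alpha$, then the iterates $x_n$ converge to $\alpha$.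 Moreover, if $$ G(0,0)=1,\quad \frac{\partial G}{\partial t_1}(0,0)=1,\quad \frac{\partial G}{\partial t_2}(0,0)=1,\quad H(0,0)=1,\quad \frac{\partial H}{\partial s_1}(0,0)=0,\quad \frac{\partial H}{\partial s_2}(0,0)=0, $$ and the second partial derivatives $\frac{\partial^2 G}{\partial t_1^2},\frac{\partial^2 G}{\partial t_2^2},\frac{\partial^2 G}{\partial t_1\partial t_2},\frac{\partial^2 H}{\partial s_1^2},\frac{\partial^2 H}{\partial s_2^2},\frac{\partial^2 H}{\partial s_1\partial s_2}$ are bounded at $(0,0)$, then this iterative scheme has order of convergence at least eight, i.e. $|x_{n+1}-\alpha|=O(|x_n-\alpha|^8)$.
   Context: The quantity $\psi_n$ is the derivative at $z_n$ of the cubic polynomial interpolating $f$ at the four points $x_n,w_n,y_n,z_n$; it serves as a derivative-free approximation of $f'(z_n)$. Order of convergence $p$ means $|x_{n+1}-\alpha|\le C|x_n-\alpha|^p$ for some constant $C$ and all $n$ large enough. *)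

theory Defs
  imports "HOL-Analysis.Analysis"
begin

text \<open>f is infinitely differentiable on D (reading of "sufficiently differentiable").\<close>
definition smooth_real_on :: "real set \<Rightarrow> (real \<Rightarrow> real) \<Rightarrow> bool" where
  "smooth_real_on D f \<longleftrightarrow>
     (\<forall>k. \<forall>x\<in>D. ((deriv ^^ k) f has_real_derivative (deriv ^^ Suc k) f x) (at x))"

fun C2k :: "nat \<Rightarrow> (real \<times> real) set \<Rightarrow> (real \<times> real \<Rightarrow> real) \<Rightarrow> bool" where
  "C2k 0 U g = continuous_on U g"
| "C2k (Suc k) U g =
     (\<exists>g1 g2. (\<forall>p\<in>U. (g has_derivative (\<lambda>h. g1 p * fst h + g2 p * snd h)) (at p))
              \<and> C2k k U g1 \<and> C2k k U g2)"

definition smooth2_near0 :: "(real \<times> real \<Rightarrow> real) \<Rightarrow> bool" where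
  "smooth2_near0 g \<longleftrightarrow> (\<exists>U. open U \<and> (0,0) \<in> U \<and> (\<forall>k. C2k k U g))"

text \<open>The derivative-free approximation psi_n of f'(z_n).\<close>
definition psi :: "(real \<Rightarrow> real) \<Rightarrow> real \<Rightarrow> real \<Rightarrow> real \<Rightarrow> real \<Rightarrow> real" where
  "psi f x w y z =
     (let v1 = f x - f y; v2 = f z - f y; v3 = f w - f y;
          a = x - y; b = z - y; c = w - y
      in b * (b - c) / ((a - b) * (a - c)) * (v1 / a)
         + (- 3 * b^2 + 2 * b * c + 2 * a * b - a * c) / ((a - b) * (b - c)) * (v2 / b)
         + b * (b - a) / ((a - c) * (b - c)) * (v3 / c))"

definition step :: "real \<Rightarrow> (real \<Rightarrow> real) \<Rightarrow> (real \<times> real \<Rightarrow> real)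
                    \<Rightarrow> (real \<times> real \<Rightarrow> real) \<Rightarrow> real \<Rightarrow> real" where
  "step \<kappa> f G H x =
     (let w = x - \<kappa> * f x;
          y = x - \<kappa> * (f x)^2 / (f x - f w);
          z = y - \<kappa> * (f y * f x) / (f x - f w) * G (f y / f x, f y / f w)
      in z - f z / psi f x w y z * H (f z / f x, f z / f w))"

definition iterates :: "real \<Rightarrow> (real \<Rightarrow> real) \<Rightarrow> (real \<times> real \<Rightarrow> real)
                    \<Rightarrow> (real \<times> real \<Rightarrow> real) \<Rightarrow> real \<Rightarrow> nat \<Rightarrow> real" where
  "iterates \<kappa> f G H x0 n = (step \<kappa> f G H ^^ n) x0"

end

theory Submission
  imports Defs "HOL-Library.Landau_Symbols"
begin

locale iter_setup =
  fixes D :: "real set" and f :: "real \<Rightarrow> real" and \<alpha> \<kappa> :: real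
  assumes D: "open D" "\<alpha> \<in> D" and sm: "smooth_real_on D f"
    and f0: "f \<alpha> = 0" and d0: "deriv f \<alpha> \<noteq> 0" and k0: "\<kappa> \<noteq> 0"
begin

lemma ex_r: "\<exists>r>0. cball \<alpha> r \<subseteq> D"
  using D open_contains_cball by blast

lemma derivs: "x \<in> D \<Longrightarrow> ((deriv ^^ k) f has_real_derivative (deriv ^^ Suc k) f x) (at x)"
  using sm unfolding smooth_real_on_def by blast

lemma cont_derivs: "x \<in> D \<Longrightarrow> isCont ((deriv ^^ k) f) x"
  using derivs DERIV_isCont by blast

lemma taylor_O:
  assumes n: "n > 0" and u: "filterlim u (nhds \<alpha>) F" and v: "filterlim v (nhds \<alpha>) F"
  shows "(\<lambda>x. f (v x) - (\<Sum>m<n. (deriv ^^ m) f (u x) / fact m * (v x - u x)^m))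
           \<in> O[F](\<lambda>x. (v x - u x)^n)"
proof -
  obtain r where r: "r > 0" "cball \<alpha> r \<subseteq> D" using ex_r by blast
  have "continuous_on (cball \<alpha> r) ((deriv ^^ n) f)"
    using cont_derivs r(2) by (meson continuous_at_imp_continuous_on subsetD)
  then have "bounded ((deriv ^^ n) f ` cball \<alpha> r)"
    by (intro compact_imp_bounded compact_continuous_image) auto
  then obtain M where M: "\<And>t. t \<in> cball \<alpha> r \<Longrightarrow> \<bar>(deriv ^^ n) f t\<bar> \<le> M"
    by (force simp: bounded_iff)
  have M0: "M \<ge> 0" using M[of \<alpha>] r by auto
  have eu: "eventually (\<lambda>x. dist (u x) \<alpha> < r) F" using u r by (auto simp: tendsto_iff)
  have ev: "eventually (\<lambda>x. dist (v x) \<alpha> < r) F" using v r by (auto simp: tendsto_iff)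
  show ?thesis
  proof (rule landau_o.bigI[of "M / fact n + 1"])
    show "M / fact n + 1 > 0" using M0 by (simp add: add_nonneg_pos)
    show "eventually (\<lambda>x. norm (f (v x) - (\<Sum>m<n. (deriv ^^ m) f (u x) / fact m * (v x - u x)^m))
            \<le> (M / fact n + 1) * norm ((v x - u x)^n)) F"
      using eu ev
    proof eventually_elim
      case (elim x)
      show ?case
      proof (cases "v x = u x")
        case True
        have "(\<Sum>m<n. (deriv ^^ m) f (u x) / fact m * (v x - u x)^m) = f (u x)"
          using n True by (cases n) (auto simp: sum.lessThan_Suc_shift)
        then show ?thesis using True n by (simp add: zero_power)
      next
        case False
        define a where "a = min (u x) (v x)"
        define b where "b = max (u x) (v x)"
        have ab: "cball \<alpha> r \<supseteq> {a..b}"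
        proof
          fix t assume "t \<in> {a..b}"
          then show "t \<in> cball \<alpha> r" using elim unfolding a_def b_def
            by (auto simp: dist_real_def)
        qed
        have "\<exists>t. (if v x < u x then v x < t \<and> t < u x else u x < t \<and> t < v x) \<and>
           f (v x) = (\<Sum>m<n. ((deriv ^^ m) f (u x) / fact m) * (v x - u x)^m)
              + ((deriv ^^ n) f t / fact n) * (v x - u x)^n"
          apply (rule Taylor[of n "\<lambda>m. (deriv ^^ m) f" f a b "u x" "v x"])
          using n apply simp
             apply simp
          using ab r(2) derivs apply (meson atLeastAtMost_iff subsetD)
          using False by (auto simp: a_def b_def)
        then obtain t where t: "(if v x < u x then v x < t \<and> t < u x else u x < t \<and> t < v x)"
          and eq: "f (v x) = (\<Sum>m<n. ((deriv ^^ m) f (u x) / fact m) * (v x - u x)^m)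
              + ((deriv ^^ n) f t / fact n) * (v x - u x)^n" by blast
        have "t \<in> {a..b}" using t unfolding a_def b_def
          by (auto split: if_splits)
        then have "t \<in> cball \<alpha> r" using ab by blast
        then have Mt: "\<bar>(deriv ^^ n) f t\<bar> \<le> M" by (rule M)
        have "norm (f (v x) - (\<Sum>m<n. (deriv ^^ m) f (u x) / fact m * (v x - u x)^m))
            = \<bar>(deriv ^^ n) f t\<bar> / fact n * \<bar>v x - u x\<bar>^n"
          using eq by (simp add: abs_mult power_abs)
        also have "\<dots> \<le> M / fact n * \<bar>v x - u x\<bar>^n"
          by (intro mult_right_mono divide_right_mono Mt) auto
        also have "\<dots> \<le> (M / fact n + 1) * norm ((v x - u x)^n)"
          by (simp add: power_abs algebra_simps)
        finally show ?thesis .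
      qed
    qed
  qed
qed

end

lemma deriv_lip:
  fixes g :: "'a::real_normed_vector \<Rightarrow> real"
  assumes "(g has_derivative L) (at x0)"
  shows "\<exists>C>0. \<exists>\<rho>>0. \<forall>y. norm (y - x0) < \<rho> \<longrightarrow> \<bar>g y - g x0\<bar> \<le> C * norm (y - x0)"
proof -
  from assms have bl: "bounded_linear L" and lim: "(\<lambda>h. norm (g (x0 + h) - g x0 - L h) / norm h) \<midarrow>0\<rightarrow> 0"
    by (auto simp: has_derivative_at)
  obtain K where K: "K > 0" "\<And>h. norm (L h) \<le> norm h * K"
    using bounded_linear.pos_bounded[OF bl] by blast
  have "eventually (\<lambda>h. norm (g (x0 + h) - g x0 - L h) / norm h < 1) (at 0)"
    using lim by (auto simp: tendsto_iff dist_real_def)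
  then obtain \<rho> where \<rho>: "\<rho> > 0" "\<And>h. h \<noteq> 0 \<Longrightarrow> dist h 0 < \<rho> \<Longrightarrow> norm (g (x0 + h) - g x0 - L h) / norm h < 1"
    unfolding eventually_at by blast
  show ?thesis
  proof (intro exI conjI allI impI)
    show "1 + K > 0" using K by simp
    show "\<rho> > 0" by fact
    fix y assume y: "norm (y - x0) < \<rho>"
    define h where "h = y - x0"
    show "\<bar>g y - g x0\<bar> \<le> (1 + K) * norm (y - x0)"
    proof (cases "h = 0")
      case True then show ?thesis by (simp add: h_def)
    next
      case False
      have "norm (g (x0 + h) - g x0 - L h) < norm h"
        using \<rho>(2)[OF False] y False by (simp add: h_def dist_norm divide_less_eq)
      moreover have "norm (L h) \<le> norm h * K" by (rule K)
      moreover have "\<bar>g (x0 + h) - g x0\<bar> \<le> norm (g (x0 + h) - g x0 - L h) + norm (L h)"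
        by (metis abs_triangle_ineq add.commute diff_add_cancel real_norm_def)
      ultimately show ?thesis by (simp add: h_def algebra_simps)
    qed
  qed
qed

lemma smooth2_C1:
  assumes "smooth2_near0 G"
  obtains U g1 g2 where "open U" "(0,0) \<in> U"
    "\<And>p. p \<in> U \<Longrightarrow> (G has_derivative (\<lambda>h. g1 p * fst h + g2 p * snd h)) (at p)"
    "\<exists>L. (g1 has_derivative L) (at (0,0))" "\<exists>L. (g2 has_derivative L) (at (0,0))"
proof -
  from assms obtain U where U: "open U" "(0,0) \<in> U" "\<forall>k. C2k k U G"
    unfolding smooth2_near0_def by blast
  from U(3) have "C2k 2 U G" by blast
  then obtain g1 g2 where g: "\<forall>p\<in>U. (G has_derivative (\<lambda>h. g1 p * fst h + g2 p * snd h)) (at p)"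
    "C2k 1 U g1" "C2k 1 U g2" by (auto simp: numeral_2_eq_2)
  from g(2) U(2) have "\<exists>L. (g1 has_derivative L) (at (0,0))" by auto
  moreover from g(3) U(2) have "\<exists>L. (g2 has_derivative L) (at (0,0))" by auto
  ultimately show ?thesis using that U g(1) by blast
qed

lemma smooth2_cont:
  assumes "smooth2_near0 G" shows "isCont G (0,0)"
proof -
  obtain U g1 g2 where U: "(0,0) \<in> U"
    "\<And>p. p \<in> U \<Longrightarrow> (G has_derivative (\<lambda>h. g1 p * fst h + g2 p * snd h)) (at p)"
    by (rule smooth2_C1[OF assms]) blast
  show ?thesis by (rule has_derivative_continuous[OF U(2)[OF U(1)]])
qed

lemma partial1:
  assumes "(G has_derivative (\<lambda>h. a * fst h + b * snd h)) (at (0,0))"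
    and "((\<lambda>t. G (t,0)) has_real_derivative p) (at 0)"
  shows "a = p"
proof -
  have "((\<lambda>t. (t, 0::real)) has_derivative (\<lambda>h. (h, 0))) (at 0)"
    by (auto intro!: derivative_eq_intros)
  from has_derivative_compose[OF this assms(1)]
  have "((\<lambda>t. G (t,0)) has_derivative (\<lambda>h. a * h)) (at 0)"
    by (simp add: o_def)
  moreover have "((\<lambda>t. G (t,0)) has_derivative (*) p) (at 0)"
    using assms(2) by (simp add: has_field_derivative_def)
  ultimately have "(\<lambda>h::real. a * h) = (*) p" by (rule has_derivative_unique)
  then have "(\<lambda>h::real. a * h) 1 = (*) p 1" by (rule fun_cong)
  then show ?thesis by simp
qed

lemma partial2:
  assumes "(G has_derivative (\<lambda>h. a * fst h + b * snd h)) (at (0,0))"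
    and "((\<lambda>t. G (0,t)) has_real_derivative q) (at 0)"
  shows "b = q"
proof -
  have "((\<lambda>t. (0::real, t)) has_derivative (\<lambda>h. (0, h))) (at 0)"
    by (auto intro!: derivative_eq_intros)
  from has_derivative_compose[OF this assms(1)]
  have "((\<lambda>t. G (0,t)) has_derivative (\<lambda>h. b * h)) (at 0)"
    by (simp add: o_def)
  moreover have "((\<lambda>t. G (0,t)) has_derivative (*) q) (at 0)"
    using assms(2) by (simp add: has_field_derivative_def)
  ultimately have "(\<lambda>h::real. b * h) = (*) q" by (rule has_derivative_unique)
  then have "(\<lambda>h::real. b * h) 1 = (*) q 1" by (rule fun_cong)
  then show ?thesis by simp
qed

lemma second_order:
  fixes G :: "real \<times> real \<Rightarrow> real"
  assumes "smooth2_near0 G"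
    and "((\<lambda>t. G (t,0)) has_real_derivative p) (at 0)"
    and "((\<lambda>t. G (0,t)) has_real_derivative q) (at 0)"
  shows "(\<lambda>v. G v - G (0,0) - p * fst v - q * snd v) \<in> O[nhds (0,0)](\<lambda>v. (norm v)^2)"
proof -
  obtain U g1 g2 where U: "open U" "(0,0) \<in> U"
    and dG: "\<And>p. p \<in> U \<Longrightarrow> (G has_derivative (\<lambda>h. g1 p * fst h + g2 p * snd h)) (at p)"
    and d1: "\<exists>L. (g1 has_derivative L) (at (0,0))" and d2: "\<exists>L. (g2 has_derivative L) (at (0,0))"
    by (rule smooth2_C1[OF assms(1)]) blast
  have a: "g1 (0,0) = p" using partial1[OF dG[OF U(2)] assms(2)] .
  have b: "g2 (0,0) = q" using partial2[OF dG[OF U(2)] assms(3)] .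
  obtain L1 where "(g1 has_derivative L1) (at (0,0))" using d1 by blast
  from deriv_lip[OF this] obtain C1 \<rho>1 where C1: "C1 > 0" "\<rho>1 > 0" "\<And>y. norm (y - (0,0)) < \<rho>1 \<Longrightarrow> \<bar>g1 y - g1 (0,0)\<bar> \<le> C1 * norm (y - (0,0))"
    by blast
  obtain L2 where "(g2 has_derivative L2) (at (0,0))" using d2 by blast
  from deriv_lip[OF this] obtain C2 \<rho>2 where C2: "C2 > 0" "\<rho>2 > 0" "\<And>y. norm (y - (0,0)) < \<rho>2 \<Longrightarrow> \<bar>g2 y - g2 (0,0)\<bar> \<le> C2 * norm (y - (0,0))"
    by blast
  obtain \<rho>3 where \<rho>3: "\<rho>3 > 0" "ball (0,0) \<rho>3 \<subseteq> U" using U open_contains_ball by blast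
  define \<rho> where "\<rho> = min \<rho>1 (min \<rho>2 \<rho>3)"
  have \<rho>: "\<rho> > 0" using C1 C2 \<rho>3 by (simp add: \<rho>_def)
  show ?thesis
  proof (rule landau_o.bigI[of "C1 + C2"])
    show "C1 + C2 > 0" using C1 C2 by simp
    have "eventually (\<lambda>v. v \<in> ball (0,0) \<rho>) (nhds (0,0))"
      using \<rho> by (intro eventually_nhds_in_open) auto
    then show "eventually (\<lambda>v. norm (G v - G (0,0) - p * fst v - q * snd v) \<le> (C1 + C2) * norm ((norm v)^2)) (nhds (0,0))"
    proof eventually_elim
      case (elim v)
      define S where "S = cball (0::real\<times>real) (norm v)"
      have vS: "v \<in> S" "(0,0) \<in> S" by (auto simp: S_def)
      have nv: "norm v < \<rho>" using elim by (metis dist_0_norm dist_commute mem_ball zero_prod_def)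
      have Ssub: "\<And>x. x \<in> S \<Longrightarrow> norm x < \<rho>"
      proof -
        fix x assume "x \<in> S"
        then have "norm x \<le> norm v" by (simp add: S_def dist_norm)
        then show "norm x < \<rho>" using nv by linarith
      qed
      define f' where "f' = (\<lambda>x h. g1 x * fst h + g2 x * snd h)"
      have "norm (G v - G (0,0) - f' (0,0) (v - (0,0))) \<le> norm (v - (0,0)) * ((C1 + C2) * norm v)"
      proof (rule differentiable_bound_linearization[where S=S])
        fix t :: real assume "t \<in> {0..1}"
        then have t: "0 \<le> t" "t \<le> 1" by auto
        have "norm (t *\<^sub>R v) = t * norm v" using t by simp
        also have "\<dots> \<le> norm v" using t by (simp add: mult_left_le_one_le)
        finally show "(0,0) + t *\<^sub>R (v - (0,0)) \<in> S"
          by (simp add: S_def dist_norm zero_prod_def[symmetric])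
      next
        fix x assume x: "x \<in> S"
        have "norm x < \<rho>3" using Ssub[OF x] by (simp add: \<rho>_def)
        then have "x \<in> ball 0 \<rho>3" by (simp add: dist_norm)
        then have "x \<in> U" using \<rho>3(2) by (auto simp: zero_prod_def)
        then show "(G has_derivative f' x) (at x within S)"
          unfolding f'_def using dG has_derivative_at_withinI by blast
      next
        fix x assume x: "x \<in> S"
        have n1: "norm x < \<rho>1" "norm x < \<rho>2" using Ssub[OF x] by (auto simp: \<rho>_def)
        have xv: "norm x \<le> norm v" using x by (simp add: S_def dist_norm)
        have "\<bar>g1 x - g1 (0,0)\<bar> \<le> C1 * norm x" using C1(3)[of x] n1 by (simp add: zero_prod_def[symmetric])
        also have "\<dots> \<le> C1 * norm v" using xv C1(1) by (simp add: mult_left_mono)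
        finally have e1: "\<bar>g1 x - g1 (0,0)\<bar> \<le> C1 * norm v" .
        have xv: "norm x \<le> norm v" using x by (simp add: S_def dist_norm)
        have "\<bar>g2 x - g2 (0,0)\<bar> \<le> C2 * norm x" using C2(3)[of x] n1 by (simp add: zero_prod_def[symmetric])
        also have "\<dots> \<le> C2 * norm v" using xv C2(1) by (simp add: mult_left_mono)
        finally have e2: "\<bar>g2 x - g2 (0,0)\<bar> \<le> C2 * norm v" .
        show "onorm (f' x - f' (0,0)) \<le> (C1 + C2) * norm v"
        proof (rule onorm_le)
          fix h :: "real \<times> real"
          have "norm ((f' x - f' (0,0)) h) = \<bar>(g1 x - g1 (0,0)) * fst h + (g2 x - g2 (0,0)) * snd h\<bar>"
            by (simp add: f'_def algebra_simps)
          also have "\<dots> \<le> \<bar>g1 x - g1 (0,0)\<bar> * \<bar>fst h\<bar> + \<bar>g2 x - g2 (0,0)\<bar> * \<bar>snd h\<bar>"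
            by (metis abs_mult abs_triangle_ineq)
          also have "\<dots> \<le> (C1 * norm v) * norm h + (C2 * norm v) * norm h"
            apply (intro add_mono mult_mono e1 e2)
            using norm_fst_le[of "fst h" "snd h"] norm_snd_le[of "snd h" "fst h"] using C1(1) C2(1) by auto
          finally show "norm ((f' x - f' (0,0)) h) \<le> (C1 + C2) * norm v * norm h"
            by (simp add: algebra_simps)
        qed
      qed (use vS in auto)
      then show ?case using a b by (simp add: f'_def power2_eq_square algebra_simps zero_prod_def[symmetric])
    qed
  qed
qed

lemma bo_tendsto0:
  fixes f g :: "'a \<Rightarrow> real"
  assumes "f \<in> O[F](g)" "(g \<longlongrightarrow> 0) F"
  shows "(f \<longlongrightarrow> 0) F"
proof -
  from assms(1) obtain c where c: "c > 0" "eventually (\<lambda>x. norm (f x) \<le> c * norm (g x)) F"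
    by (elim landau_o.bigE)
  have "((\<lambda>x. c * norm (g x)) \<longlongrightarrow> c * 0) F"
    by (intro tendsto_mult tendsto_const tendsto_norm_zero assms(2))
  then have "((\<lambda>x. c * norm (g x)) \<longlongrightarrow> 0) F" by simp
  from Lim_null_comparison[OF c(2) this] show ?thesis .
qed

lemma bo_const1: "((f::'a \<Rightarrow> real) \<longlongrightarrow> c) F \<Longrightarrow> f \<in> O[F](\<lambda>_. 1)"
  by (rule bigoI_tendsto[where c=c]) auto

lemma theta_sub: "(g::'a\<Rightarrow>real) \<in> o[F](f) \<Longrightarrow> (\<lambda>x. f x - g x) \<in> \<Theta>[F](f)"
  using landau_theta.diff_absorb2[of g F f] bigtheta_refl[of "\<lambda>x. f x - g x" F] by simp

lemma bo_ev: "eventually (\<lambda>x. f x = g x) F \<Longrightarrow> g \<in> O[F](h) \<Longrightarrow> f \<in> O[F](h)"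
  using landau_o.big.in_cong by blast

lemma bo_rhs: "eventually (\<lambda>x. h x = h' x) F \<Longrightarrow> f \<in> O[F](h) \<Longrightarrow> f \<in> O[F](h')"
  using landau_o.big.cong by blast

lemma bo_cmult: "f \<in> O[F](g) \<Longrightarrow> (\<lambda>x. c * f x) \<in> O[F](g)"
  by (cases "c = 0") simp_all

lemma bo_pow_mono:
  fixes f :: "'a \<Rightarrow> real"
  assumes "(f \<longlongrightarrow> 0) F" "n \<le> m"
  shows "(\<lambda>x. f x ^ m) \<in> O[F](\<lambda>x. f x ^ n)"
proof -
  have "((\<lambda>x. f x ^ (m - n)) \<longlongrightarrow> 0 ^ (m - n)) F" by (intro tendsto_power assms)
  then have "(\<lambda>x. f x ^ (m - n)) \<in> O[F](\<lambda>_. 1)" by (rule bo_const1)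
  then have "(\<lambda>x. f x ^ n * f x ^ (m - n)) \<in> O[F](\<lambda>x. f x ^ n)"
    by (rule landau_o.big_1_mult[OF landau_o.big_refl])
  moreover have "\<And>x. f x ^ n * f x ^ (m - n) = f x ^ m" using assms(2)
    by (simp add: power_add[symmetric])
  ultimately show ?thesis by simp
qed

lemma bo_div:
  fixes f1 f2 g1 g2 :: "'a \<Rightarrow> real"
  assumes "f1 \<in> O[F](f2)" "g1 \<in> \<Theta>[F](g2)" "eventually (\<lambda>x. g2 x \<noteq> 0) F"
  shows "(\<lambda>x. f1 x / g1 x) \<in> O[F](\<lambda>x. f2 x / g2 x)"
proof -
  have "eventually (\<lambda>x. g1 x \<noteq> 0) F" using assms(2,3) eventually_nonzero_bigtheta by blast
  moreover have "g2 \<in> \<Theta>[F](g1)" using assms(2) bigtheta_sym by blast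
  then have "g2 \<in> O[F](g1)" by blast
  ultimately show ?thesis using assms by (intro landau_o.big.divide) auto
qed

context iter_setup
begin

definition "d = deriv f \<alpha>"
definition "d2 = (deriv ^^ 2) f \<alpha> / 2"
definition "d3 = (deriv ^^ 3) f \<alpha> / 6"
definition "P h = d * h + d2 * h^2 + d3 * h^3"
definition "W x = x - \<kappa> * f x"
definition "Y x = x - \<kappa> * (f x)^2 / (f x - f (W x))"
definition "D1 x = (f x - f (W x)) / (x - W x)"
definition "F1 = at \<alpha> within {x. W x \<noteq> \<alpha>}"

lemma dnz: "d \<noteq> 0" using d0 by (simp add: d_def)

lemma fdiff: "((\<lambda>y. f y / (y - \<alpha>)) \<longlongrightarrow> d) (at \<alpha>)"
proof -
  have "(f has_real_derivative d) (at \<alpha>)" using derivs[OF D(2), of 0] by (simp add: d_def)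
  then show ?thesis by (simp add: has_field_derivative_iff f0)
qed

lemma tay4:
  assumes "(u \<longlongrightarrow> \<alpha>) F"
  shows "(\<lambda>x. f (u x) - P (u x - \<alpha>)) \<in> O[F](\<lambda>x. (u x - \<alpha>)^4)"
proof -
  have "\<And>h. (\<Sum>m<4. (deriv ^^ m) f \<alpha> / fact m * h^m) = P h"
    by (simp add: P_def d_def d2_def d3_def eval_nat_numeral f0 algebra_simps)
  then show ?thesis using taylor_O[of 4 "\<lambda>_. \<alpha>" F u] assms by simp
qed

lemma tay2:
  assumes "(u \<longlongrightarrow> \<alpha>) F"
  shows "(\<lambda>x. f (u x) - d * (u x - \<alpha>)) \<in> O[F](\<lambda>x. (u x - \<alpha>)^2)"
proof -
  have "\<And>h. (\<Sum>m<2. (deriv ^^ m) f \<alpha> / fact m * h^m) = d * h"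
    by (simp add: d_def eval_nat_numeral f0)
  then show ?thesis using taylor_O[of 2 "\<lambda>_. \<alpha>" F u] assms by simp
qed

lemma tay1:
  assumes "(u \<longlongrightarrow> \<alpha>) F"
  shows "(\<lambda>x. f (u x)) \<in> O[F](\<lambda>x. u x - \<alpha>)"
  using taylor_O[of 1 "\<lambda>_. \<alpha>" F u] assms by (simp add: f0)

lemma F1_le: "F1 \<le> at \<alpha>" unfolding F1_def by (rule at_le) simp

lemma tE: "((\<lambda>x. x) \<longlongrightarrow> \<alpha>) F1" unfolding F1_def by (rule tendsto_ident_at)

lemma tE0: "((\<lambda>x. x - \<alpha>) \<longlongrightarrow> 0) F1"
  using tendsto_diff[OF tE tendsto_const[of \<alpha>]] by simp

lemma nzE: "eventually (\<lambda>x. x - \<alpha> \<noteq> 0) F1"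
  unfolding F1_def by (simp add: eventually_at_filter)

lemma nzEw: "eventually (\<lambda>x. W x - \<alpha> \<noteq> 0) F1"
  unfolding F1_def by (simp add: eventually_at_filter)

lemma fxT: "(\<lambda>x. f x) \<in> \<Theta>[F1](\<lambda>x. x - \<alpha>)"
  using bigthetaI_tendsto[OF dnz tendsto_mono[OF F1_le fdiff]] .

lemma nzfx: "eventually (\<lambda>x. f x \<noteq> 0) F1"
  using eventually_nonzero_bigtheta[OF fxT] nzE by blast

lemma fxO: "(\<lambda>x. f x) \<in> O[F1](\<lambda>x. x - \<alpha>)" using fxT by blast

lemma xWT: "(\<lambda>x. x - W x) \<in> \<Theta>[F1](\<lambda>x. x - \<alpha>)"
proof -
  have "(\<lambda>x. \<kappa> * f x) \<in> \<Theta>[F1](\<lambda>x. x - \<alpha>)" using fxT k0 by simp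
  then show ?thesis by (simp add: W_def)
qed

lemma nzxW: "eventually (\<lambda>x. x - W x \<noteq> 0) F1"
  using eventually_nonzero_bigtheta[OF xWT] nzE by blast

lemma EwO: "(\<lambda>x. W x - \<alpha>) \<in> O[F1](\<lambda>x. x - \<alpha>)"
proof -
  have "(\<lambda>x. \<kappa> * f x) \<in> O[F1](\<lambda>x. x - \<alpha>)" using fxO by simp
  from sum_in_bigo(2)[OF landau_o.big_refl this]
  have "(\<lambda>x. (x - \<alpha>) - \<kappa> * f x) \<in> O[F1](\<lambda>x. x - \<alpha>)" .
  then show ?thesis by (simp add: W_def algebra_simps)
qed

lemma tEw0: "((\<lambda>x. W x - \<alpha>) \<longlongrightarrow> 0) F1" using bo_tendsto0[OF EwO tE0] .

lemma tW: "(W \<longlongrightarrow> \<alpha>) F1"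
  using tendsto_add[OF tEw0 tendsto_const[of \<alpha>]] by simp

lemma fwT: "(\<lambda>x. f (W x)) \<in> \<Theta>[F1](\<lambda>x. W x - \<alpha>)"
proof -
  have "filterlim W (at \<alpha>) F1" using tW nzEw by (intro filterlim_atI) auto
  from filterlim_compose[OF fdiff this] show ?thesis by (intro bigthetaI_tendsto[OF dnz]) (simp add: o_def)
qed

lemma nzfw: "eventually (\<lambda>x. f (W x) \<noteq> 0) F1"
  using eventually_nonzero_bigtheta[OF fwT] nzEw by blast

lemma rxO: "(\<lambda>x. f x - P (x - \<alpha>)) \<in> O[F1](\<lambda>x. (x - \<alpha>)^4)"
  using tay4[OF tE] .

lemma rwO: "(\<lambda>x. f (W x) - P (W x - \<alpha>)) \<in> O[F1](\<lambda>x. (x - \<alpha>)^4)"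
  using landau_o.big_trans[OF tay4[OF tW] landau_o.big_power[OF EwO, of 4]] .

lemma rwO': "(\<lambda>x. f (W x) - P (W x - \<alpha>)) \<in> O[F1](\<lambda>x. (W x - \<alpha>)^4)"
  using tay4[OF tW] .

lemma E3: "(\<lambda>x. (x - \<alpha>)^3) \<in> O[F1](\<lambda>x. (x - \<alpha>)^2)"
  using bo_pow_mono[OF tE0, of 2 3] by simp

lemma D1_exp: "(\<lambda>x. D1 x - (d + d2 * ((x - \<alpha>) + (W x - \<alpha>)))) \<in> O[F1](\<lambda>x. (x - \<alpha>)^2)"
proof -
  define rx where "rx x = f x - P (x - \<alpha>)" for x
  define rw where "rw x = f (W x) - P (W x - \<alpha>)" for x
  have "(\<lambda>x. rx x - rw x) \<in> O[F1](\<lambda>x. (x - \<alpha>)^4)"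
    unfolding rx_def rw_def by (rule sum_in_bigo(2)[OF rxO rwO])
  then have "(\<lambda>x. (rx x - rw x) / (x - W x)) \<in> O[F1](\<lambda>x. (x - \<alpha>)^4 / (x - \<alpha>))"
    by (rule bo_div[OF _ xWT nzE])
  moreover have "eventually (\<lambda>x. (x - \<alpha>)^4 / (x - \<alpha>) = (x - \<alpha>)^3) F1"
    using nzE by eventually_elim (simp add: eval_nat_numeral)
  ultimately have "(\<lambda>x. (rx x - rw x) / (x - W x)) \<in> O[F1](\<lambda>x. (x - \<alpha>)^3)"
    by (rule bo_rhs[rotated])
  then have q: "(\<lambda>x. (rx x - rw x) / (x - W x)) \<in> O[F1](\<lambda>x. (x - \<alpha>)^2)"
    using E3 by (rule landau_o.big_trans)
  have a: "(\<lambda>x. (x - \<alpha>) * (W x - \<alpha>)) \<in> O[F1](\<lambda>x. (x - \<alpha>)^2)"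
    using landau_o.big.mult[OF landau_o.big_refl[of "\<lambda>x. x - \<alpha>"] EwO] by (simp add: power2_eq_square)
  have b: "(\<lambda>x. (W x - \<alpha>)^2) \<in> O[F1](\<lambda>x. (x - \<alpha>)^2)"
    using landau_o.big_power[OF EwO] .
  have c: "(\<lambda>x. d3 * ((x - \<alpha>)^2 + (x - \<alpha>) * (W x - \<alpha>) + (W x - \<alpha>)^2)) \<in> O[F1](\<lambda>x. (x - \<alpha>)^2)"
  proof -
    have "(\<lambda>x. (x - \<alpha>)^2 + (x - \<alpha>) * (W x - \<alpha>) + (W x - \<alpha>)^2) \<in> O[F1](\<lambda>x. (x - \<alpha>)^2)"
      by (rule sum_in_bigo(1)[OF sum_in_bigo(1)[OF landau_o.big_refl a] b])
    then show ?thesis by simp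
  qed
  have "eventually (\<lambda>x. D1 x - (d + d2 * ((x - \<alpha>) + (W x - \<alpha>)))
      = d3 * ((x - \<alpha>)^2 + (x - \<alpha>) * (W x - \<alpha>) + (W x - \<alpha>)^2) + (rx x - rw x) / (x - W x)) F1"
    using nzxW
  proof eventually_elim
    case (elim x)
    have key: "P (x - \<alpha>) - P (W x - \<alpha>) = (x - W x) * (d + d2 * ((x - \<alpha>) + (W x - \<alpha>))
       + d3 * ((x - \<alpha>)^2 + (x - \<alpha>) * (W x - \<alpha>) + (W x - \<alpha>)^2))"
      by (simp add: P_def algebra_simps power2_eq_square power3_eq_cube)
    have "f x - f (W x) = (rx x - rw x) + (x - W x) * (d + d2 * ((x - \<alpha>) + (W x - \<alpha>))
       + d3 * ((x - \<alpha>)^2 + (x - \<alpha>) * (W x - \<alpha>) + (W x - \<alpha>)^2))"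
      using key by (simp add: rx_def rw_def)
    then have "D1 x = (rx x - rw x) / (x - W x) + (d + d2 * ((x - \<alpha>) + (W x - \<alpha>))
       + d3 * ((x - \<alpha>)^2 + (x - \<alpha>) * (W x - \<alpha>) + (W x - \<alpha>)^2))"
      using elim by (simp add: D1_def add_divide_distrib)
    then show ?case by (simp add: algebra_simps)
  qed
  moreover have "(\<lambda>x. d3 * ((x - \<alpha>)^2 + (x - \<alpha>) * (W x - \<alpha>) + (W x - \<alpha>)^2) + (rx x - rw x) / (x - W x)) \<in> O[F1](\<lambda>x. (x - \<alpha>)^2)"
    by (rule sum_in_bigo(1)[OF c q])
  ultimately show ?thesis by (rule bo_ev)
qed

lemma E2E: "(\<lambda>x. (x - \<alpha>)^2) \<in> O[F1](\<lambda>x. x - \<alpha>)"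
  using bo_pow_mono[OF tE0, of 1 2] by simp

lemma E1: "(\<lambda>x. x - \<alpha>) \<in> O[F1](\<lambda>_. 1)" using bo_const1[OF tE0] .
lemma Ew1: "(\<lambda>x. W x - \<alpha>) \<in> O[F1](\<lambda>_. 1)" using bo_const1[OF tEw0] .

lemma D1d: "(\<lambda>x. D1 x - d) \<in> O[F1](\<lambda>x. x - \<alpha>)"
proof -
  have a: "(\<lambda>x. D1 x - (d + d2 * ((x - \<alpha>) + (W x - \<alpha>)))) \<in> O[F1](\<lambda>x. x - \<alpha>)"
    using landau_o.big_trans[OF D1_exp E2E] .
  have "(\<lambda>x. (x - \<alpha>) + (W x - \<alpha>)) \<in> O[F1](\<lambda>x. x - \<alpha>)"
    by (rule sum_in_bigo(1)[OF landau_o.big_refl EwO])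
  then have b: "(\<lambda>x. d2 * ((x - \<alpha>) + (W x - \<alpha>))) \<in> O[F1](\<lambda>x. x - \<alpha>)" by simp
  have "(\<lambda>x. (D1 x - (d + d2 * ((x - \<alpha>) + (W x - \<alpha>)))) + d2 * ((x - \<alpha>) + (W x - \<alpha>))) \<in> O[F1](\<lambda>x. x - \<alpha>)"
    by (rule sum_in_bigo(1)[OF a b])
  then show ?thesis by (simp add: algebra_simps)
qed

lemma D1T: "(D1 \<longlongrightarrow> d) F1"
proof -
  have "((\<lambda>x. D1 x - d) \<longlongrightarrow> 0) F1" using bo_tendsto0[OF D1d tE0] .
  from tendsto_add[OF this tendsto_const[of d]] show ?thesis by simp
qed

lemma D1th: "D1 \<in> \<Theta>[F1](\<lambda>_. 1)"
  using D1T by (intro bigthetaI_tendsto[OF dnz]) simp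

lemma nzD1: "eventually (\<lambda>x. D1 x \<noteq> 0) F1"
  using eventually_nonzero_bigtheta[OF D1th] by simp

lemma Yeq: "Y x = x - f x / D1 x"
  by (simp add: Y_def D1_def W_def power2_eq_square)

lemma Ey2: "(\<lambda>x. (Y x - \<alpha>) - d2 / d * ((x - \<alpha>) * (W x - \<alpha>))) \<in> O[F1](\<lambda>x. (x - \<alpha>)^2 * (W x - \<alpha>))"
proof -
  define rx where "rx x = f x - P (x - \<alpha>)" for x
  define rw where "rw x = f (W x) - P (W x - \<alpha>)" for x
  define K where "K x = (x - \<alpha>) * D1 x - f x" for x
  have Keq: "eventually (\<lambda>x. K x - d2 * ((x - \<alpha>) * (W x - \<alpha>)) = d3 * ((x - \<alpha>) * (W x - \<alpha>) * ((x - \<alpha>) + (W x - \<alpha>)))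
     + ((W x - \<alpha>) * rx x - (x - \<alpha>) * rw x) / (x - W x)) F1"
    using nzxW
  proof eventually_elim
    case (elim x)
    have key: "(W x - \<alpha>) * P (x - \<alpha>) - (x - \<alpha>) * P (W x - \<alpha>) = (x - W x) * (d2 * ((x - \<alpha>) * (W x - \<alpha>))
       + d3 * ((x - \<alpha>) * (W x - \<alpha>) * ((x - \<alpha>) + (W x - \<alpha>))))"
      by (simp add: P_def algebra_simps power2_eq_square power3_eq_cube)
    have dd: "D1 x * (x - W x) = f x - f (W x)" using elim by (simp add: D1_def)
    have "K x * (x - W x) = (x - \<alpha>) * (D1 x * (x - W x)) - f x * (x - W x)"
      by (simp add: K_def algebra_simps)
    also have "\<dots> = (x - \<alpha>) * (f x - f (W x)) - f x * (x - W x)" by (simp only: dd)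
    finally have "K x * (x - W x) = (x - \<alpha>) * (f x - f (W x)) - f x * (x - W x)" .
    also have "(x - \<alpha>) * (f x - f (W x)) - f x * (x - W x) = (W x - \<alpha>) * f x - (x - \<alpha>) * f (W x)" by (simp add: algebra_simps)
    also have "\<dots> = (W x - \<alpha>) * P (x - \<alpha>) - (x - \<alpha>) * P (W x - \<alpha>) + ((W x - \<alpha>) * rx x - (x - \<alpha>) * rw x)"
      by (simp add: rx_def rw_def algebra_simps)
    finally have "K x = ((x - W x) * (d2 * ((x - \<alpha>) * (W x - \<alpha>))
       + d3 * ((x - \<alpha>) * (W x - \<alpha>) * ((x - \<alpha>) + (W x - \<alpha>)))) + ((W x - \<alpha>) * rx x - (x - \<alpha>) * rw x)) / (x - W x)"
      using elim key by (simp add: field_simps)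
    then show ?case using elim by (simp add: add_divide_distrib)
  qed
  have t1: "(\<lambda>x. d3 * ((x - \<alpha>) * (W x - \<alpha>) * ((x - \<alpha>) + (W x - \<alpha>)))) \<in> O[F1](\<lambda>x. (x - \<alpha>)^2 * (W x - \<alpha>))"
  proof -
    have "(\<lambda>x. (x - \<alpha>) + (W x - \<alpha>)) \<in> O[F1](\<lambda>x. x - \<alpha>)"
      by (rule sum_in_bigo(1)[OF landau_o.big_refl EwO])
    from landau_o.big.mult[OF landau_o.big_refl[of "\<lambda>x. (x - \<alpha>) * (W x - \<alpha>)"] this]
    have "(\<lambda>x. (x - \<alpha>) * (W x - \<alpha>) * ((x - \<alpha>) + (W x - \<alpha>))) \<in> O[F1](\<lambda>x. (x - \<alpha>)^2 * (W x - \<alpha>))"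
      by (simp add: power2_eq_square mult_ac)
    then show ?thesis by simp
  qed
  have t2: "(\<lambda>x. ((W x - \<alpha>) * rx x - (x - \<alpha>) * rw x) / (x - W x)) \<in> O[F1](\<lambda>x. (x - \<alpha>)^2 * (W x - \<alpha>))"
  proof -
    have a: "(\<lambda>x. (W x - \<alpha>) * rx x) \<in> O[F1](\<lambda>x. (x - \<alpha>)^4 * (W x - \<alpha>))"
      using landau_o.big.mult_left[OF rxO[folded rx_def], of "\<lambda>x. W x - \<alpha>"] by (simp add: mult_ac)
    have "(\<lambda>x. (W x - \<alpha>) * (W x - \<alpha>)^3) \<in> O[F1](\<lambda>x. (W x - \<alpha>) * (x - \<alpha>)^3)"
      using landau_o.big.mult_left[OF landau_o.big_power[OF EwO, of 3]] .
    then have "(\<lambda>x. (W x - \<alpha>)^4) \<in> O[F1](\<lambda>x. (W x - \<alpha>) * (x - \<alpha>)^3)"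
      by (simp add: eval_nat_numeral)
    from landau_o.big_trans[OF rwO'[folded rw_def] this]
    have "(\<lambda>x. (x - \<alpha>) * rw x) \<in> O[F1](\<lambda>x. (x - \<alpha>) * ((W x - \<alpha>) * (x - \<alpha>)^3))"
      by (rule landau_o.big.mult_left)
    then have b: "(\<lambda>x. (x - \<alpha>) * rw x) \<in> O[F1](\<lambda>x. (x - \<alpha>)^4 * (W x - \<alpha>))"
      by (simp add: eval_nat_numeral mult_ac)
    have "(\<lambda>x. ((W x - \<alpha>) * rx x - (x - \<alpha>) * rw x) / (x - W x)) \<in> O[F1](\<lambda>x. (x - \<alpha>)^4 * (W x - \<alpha>) / (x - \<alpha>))"
      by (rule bo_div[OF sum_in_bigo(2)[OF a b] xWT nzE])
    moreover have "eventually (\<lambda>x. (x - \<alpha>)^4 * (W x - \<alpha>) / (x - \<alpha>) = (x - \<alpha>)^3 * (W x - \<alpha>)) F1"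
      using nzE by eventually_elim (simp add: eval_nat_numeral)
    ultimately have "(\<lambda>x. ((W x - \<alpha>) * rx x - (x - \<alpha>) * rw x) / (x - W x)) \<in> O[F1](\<lambda>x. (x - \<alpha>)^3 * (W x - \<alpha>))"
      by (rule bo_rhs[rotated])
    moreover have "(\<lambda>x. (x - \<alpha>)^3 * (W x - \<alpha>)) \<in> O[F1](\<lambda>x. (x - \<alpha>)^2 * (W x - \<alpha>))"
      by (rule landau_o.big.mult_right[OF E3])
    ultimately show ?thesis by (rule landau_o.big_trans)
  qed
  have Kd: "(\<lambda>x. K x - d2 * ((x - \<alpha>) * (W x - \<alpha>))) \<in> O[F1](\<lambda>x. (x - \<alpha>)^2 * (W x - \<alpha>))"
    by (rule bo_ev[OF Keq sum_in_bigo(1)[OF t1 t2]])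
  have t3: "(\<lambda>x. d2 / d * ((x - \<alpha>) * (W x - \<alpha>)) * (D1 x - d)) \<in> O[F1](\<lambda>x. (x - \<alpha>)^2 * (W x - \<alpha>))"
  proof -
    from landau_o.big.mult[OF landau_o.big_refl[of "\<lambda>x. (x - \<alpha>) * (W x - \<alpha>)"] D1d]
    have "(\<lambda>x. (x - \<alpha>) * (W x - \<alpha>) * (D1 x - d)) \<in> O[F1](\<lambda>x. (x - \<alpha>)^2 * (W x - \<alpha>))"
      by (simp add: power2_eq_square mult_ac)
    from bo_cmult[OF this, of "d2 / d"] show ?thesis by (simp only: mult.assoc)
  qed
  have num: "(\<lambda>x. (K x - d2 * ((x - \<alpha>) * (W x - \<alpha>))) - d2 / d * ((x - \<alpha>) * (W x - \<alpha>)) * (D1 x - d)) \<in> O[F1](\<lambda>x. (x - \<alpha>)^2 * (W x - \<alpha>))"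
    by (rule sum_in_bigo(2)[OF Kd t3])
  have "(\<lambda>x. ((K x - d2 * ((x - \<alpha>) * (W x - \<alpha>))) - d2 / d * ((x - \<alpha>) * (W x - \<alpha>)) * (D1 x - d)) / D1 x) \<in> O[F1](\<lambda>x. (x - \<alpha>)^2 * (W x - \<alpha>) / 1)"
    by (rule bo_div[OF num D1th]) simp
  then have q: "(\<lambda>x. ((K x - d2 * ((x - \<alpha>) * (W x - \<alpha>))) - d2 / d * ((x - \<alpha>) * (W x - \<alpha>)) * (D1 x - d)) / D1 x) \<in> O[F1](\<lambda>x. (x - \<alpha>)^2 * (W x - \<alpha>))"
    by simp
  have "eventually (\<lambda>x. (Y x - \<alpha>) - d2 / d * ((x - \<alpha>) * (W x - \<alpha>))
     = ((K x - d2 * ((x - \<alpha>) * (W x - \<alpha>))) - d2 / d * ((x - \<alpha>) * (W x - \<alpha>)) * (D1 x - d)) / D1 x) F1"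
    using nzD1
  proof eventually_elim
    case (elim x)
    have "Y x - \<alpha> = K x / D1 x" using elim by (simp add: Yeq K_def field_simps)
    then show ?case using elim dnz by (simp add: field_simps)
  qed
  then show ?thesis by (rule bo_ev) (rule q)
qed

lemma EyO: "(\<lambda>x. Y x - \<alpha>) \<in> O[F1](\<lambda>x. (x - \<alpha>) * (W x - \<alpha>))"
proof -
  have a: "(\<lambda>x. (x - \<alpha>)^2 * (W x - \<alpha>)) \<in> O[F1](\<lambda>x. (x - \<alpha>) * (W x - \<alpha>))"
    using landau_o.big.mult_right[OF E2E] .
  have b: "(\<lambda>x. d2 / d * ((x - \<alpha>) * (W x - \<alpha>))) \<in> O[F1](\<lambda>x. (x - \<alpha>) * (W x - \<alpha>))"
    by (rule bo_cmult[OF landau_o.big_refl])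
  have "(\<lambda>x. ((Y x - \<alpha>) - d2 / d * ((x - \<alpha>) * (W x - \<alpha>))) + d2 / d * ((x - \<alpha>) * (W x - \<alpha>))) \<in> O[F1](\<lambda>x. (x - \<alpha>) * (W x - \<alpha>))"
    by (rule sum_in_bigo(1)[OF landau_o.big_trans[OF Ey2 a] b])
  then show ?thesis by simp
qed

lemma tEEw: "((\<lambda>x. (x - \<alpha>) * (W x - \<alpha>)) \<longlongrightarrow> 0) F1"
  using tendsto_mult[OF tE0 tEw0] by simp

lemma tY: "(Y \<longlongrightarrow> \<alpha>) F1"
  using tendsto_add[OF bo_tendsto0[OF EyO tEEw] tendsto_const[of \<alpha>]] by simp

end

locale iter_full = iter_setup D f \<alpha> \<kappa> for D f \<alpha> \<kappa> +
  fixes G H :: "real \<times> real \<Rightarrow> real"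
begin

definition "T x = (f (Y x) / f x, f (Y x) / f (W x))"
definition "Z x = Y x - \<kappa> * (f (Y x) * f x) / (f x - f (W x)) * G (T x)"

lemma Zeq: "Z x = Y x - f (Y x) / D1 x * G (T x)"
  by (simp add: Z_def D1_def W_def)

lemma fyO: "(\<lambda>x. f (Y x)) \<in> O[F1](\<lambda>x. (x - \<alpha>) * (W x - \<alpha>))"
  using landau_o.big_trans[OF tay1[OF tY] EyO] .

lemma fy2: "(\<lambda>x. f (Y x) - d * (Y x - \<alpha>)) \<in> O[F1](\<lambda>x. ((x - \<alpha>) * (W x - \<alpha>))^2)"
  using landau_o.big_trans[OF tay2[OF tY] landau_o.big_power[OF EyO, of 2]] .

lemma EEw2: "(\<lambda>x. ((x - \<alpha>) * (W x - \<alpha>))^2) \<in> O[F1](\<lambda>x. (x - \<alpha>)^2 * (W x - \<alpha>))"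
proof -
  have "(\<lambda>x. ((x - \<alpha>)^2 * (W x - \<alpha>)) * (W x - \<alpha>)) \<in> O[F1](\<lambda>x. (x - \<alpha>)^2 * (W x - \<alpha>))"
    by (rule landau_o.big_1_mult[OF landau_o.big_refl Ew1])
  then show ?thesis by (simp add: power2_eq_square mult_ac)
qed

lemma EEw2': "(\<lambda>x. ((x - \<alpha>) * (W x - \<alpha>))^2) \<in> O[F1](\<lambda>x. (x - \<alpha>)^3 * (W x - \<alpha>))"
proof -
  have "(\<lambda>x. ((x - \<alpha>)^2 * (W x - \<alpha>)) * (W x - \<alpha>)) \<in> O[F1](\<lambda>x. ((x - \<alpha>)^2 * (W x - \<alpha>)) * (x - \<alpha>))"
    by (rule landau_o.big.mult_left[OF EwO])
  then show ?thesis by (simp add: power2_eq_square power3_eq_cube mult_ac)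
qed

lemma fy2': "(\<lambda>x. f (Y x) - d * (Y x - \<alpha>)) \<in> O[F1](\<lambda>x. (x - \<alpha>)^2 * (W x - \<alpha>))"
  using landau_o.big_trans[OF fy2 EEw2] .

lemma t1O: "(\<lambda>x. fst (T x)) \<in> O[F1](\<lambda>x. W x - \<alpha>)"
proof -
  have "(\<lambda>x. f (Y x) / f x) \<in> O[F1](\<lambda>x. (x - \<alpha>) * (W x - \<alpha>) / (x - \<alpha>))"
    by (rule bo_div[OF fyO fxT nzE])
  moreover have "eventually (\<lambda>x. (x - \<alpha>) * (W x - \<alpha>) / (x - \<alpha>) = W x - \<alpha>) F1"
    using nzE by eventually_elim simp
  ultimately show ?thesis unfolding T_def by (simp add: bo_rhs)
qed

lemma t2O: "(\<lambda>x. snd (T x)) \<in> O[F1](\<lambda>x. x - \<alpha>)"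
proof -
  have "(\<lambda>x. f (Y x) / f (W x)) \<in> O[F1](\<lambda>x. (x - \<alpha>) * (W x - \<alpha>) / (W x - \<alpha>))"
    by (rule bo_div[OF fyO fwT nzEw])
  moreover have "eventually (\<lambda>x. (x - \<alpha>) * (W x - \<alpha>) / (W x - \<alpha>) = x - \<alpha>) F1"
    using nzEw by eventually_elim simp
  ultimately show ?thesis unfolding T_def by (simp add: bo_rhs)
qed

lemma tT: "(T \<longlongrightarrow> (0,0)) F1"
proof -
  have "((\<lambda>x. (fst (T x), snd (T x))) \<longlongrightarrow> (0,0)) F1"
    by (intro tendsto_Pair bo_tendsto0[OF t1O tEw0] bo_tendsto0[OF t2O tE0])
  then show ?thesis by simp
qed

lemma t1d: "(\<lambda>x. d * fst (T x) - d2 * (W x - \<alpha>)) \<in> O[F1](\<lambda>x. (x - \<alpha>)^2)"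
proof -
  define N where "N x = d * (f (Y x) - d * (Y x - \<alpha>)) + d^2 * ((Y x - \<alpha>) - d2 / d * ((x - \<alpha>) * (W x - \<alpha>)))
      - d2 * ((W x - \<alpha>) * (f x - d * (x - \<alpha>)))" for x
  have a: "(\<lambda>x. d * (f (Y x) - d * (Y x - \<alpha>))) \<in> O[F1](\<lambda>x. (x - \<alpha>)^2 * (W x - \<alpha>))"
    by (rule bo_cmult[OF fy2'])
  have b: "(\<lambda>x. d^2 * ((Y x - \<alpha>) - d2 / d * ((x - \<alpha>) * (W x - \<alpha>)))) \<in> O[F1](\<lambda>x. (x - \<alpha>)^2 * (W x - \<alpha>))"
    by (rule bo_cmult[OF Ey2])
  have "(\<lambda>x. (W x - \<alpha>) * (f x - d * (x - \<alpha>))) \<in> O[F1](\<lambda>x. (W x - \<alpha>) * (x - \<alpha>)^2)"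
    by (rule landau_o.big.mult_left[OF tay2[OF tE]])
  then have c: "(\<lambda>x. d2 * ((W x - \<alpha>) * (f x - d * (x - \<alpha>)))) \<in> O[F1](\<lambda>x. (x - \<alpha>)^2 * (W x - \<alpha>))"
    by (intro bo_cmult) (simp add: mult.commute)
  have N: "N \<in> O[F1](\<lambda>x. (x - \<alpha>)^2 * (W x - \<alpha>))"
    unfolding N_def by (rule sum_in_bigo(2)[OF sum_in_bigo(1)[OF a b] c])
  have "(\<lambda>x. N x / f x) \<in> O[F1](\<lambda>x. (x - \<alpha>)^2 * (W x - \<alpha>) / (x - \<alpha>))"
    by (rule bo_div[OF N fxT nzE])
  moreover have "eventually (\<lambda>x. (x - \<alpha>)^2 * (W x - \<alpha>) / (x - \<alpha>) = (x - \<alpha>) * (W x - \<alpha>)) F1"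
    using nzE by eventually_elim (simp add: power2_eq_square)
  ultimately have "(\<lambda>x. N x / f x) \<in> O[F1](\<lambda>x. (x - \<alpha>) * (W x - \<alpha>))" by (rule bo_rhs[rotated])
  moreover have "(\<lambda>x. (x - \<alpha>) * (W x - \<alpha>)) \<in> O[F1](\<lambda>x. (x - \<alpha>)^2)"
    using landau_o.big.mult_left[OF EwO, of "\<lambda>x. x - \<alpha>"] by (simp add: power2_eq_square)
  ultimately have q: "(\<lambda>x. N x / f x) \<in> O[F1](\<lambda>x. (x - \<alpha>)^2)" by (rule landau_o.big_trans)
  have "eventually (\<lambda>x. d * fst (T x) - d2 * (W x - \<alpha>) = N x / f x) F1"
    using nzfx
  proof eventually_elim
    case (elim x)
    have "N x = d * f (Y x) - d2 * (W x - \<alpha>) * f x" using dnz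
      by (simp add: N_def power2_eq_square field_simps)
    then show ?case using elim by (simp add: T_def field_simps)
  qed
  then show ?thesis by (rule bo_ev) (rule q)
qed

lemma t2d: "(\<lambda>x. d * snd (T x) - d2 * (x - \<alpha>)) \<in> O[F1](\<lambda>x. (x - \<alpha>)^2)"
proof -
  define N where "N x = d * (f (Y x) - d * (Y x - \<alpha>)) + d^2 * ((Y x - \<alpha>) - d2 / d * ((x - \<alpha>) * (W x - \<alpha>)))
      - d2 * ((x - \<alpha>) * (f (W x) - d * (W x - \<alpha>)))" for x
  have a: "(\<lambda>x. d * (f (Y x) - d * (Y x - \<alpha>))) \<in> O[F1](\<lambda>x. (x - \<alpha>)^2 * (W x - \<alpha>))"
    by (rule bo_cmult[OF fy2'])
  have b: "(\<lambda>x. d^2 * ((Y x - \<alpha>) - d2 / d * ((x - \<alpha>) * (W x - \<alpha>)))) \<in> O[F1](\<lambda>x. (x - \<alpha>)^2 * (W x - \<alpha>))"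
    by (rule bo_cmult[OF Ey2])
  have "(\<lambda>x. (W x - \<alpha>)^2) \<in> O[F1](\<lambda>x. (W x - \<alpha>) * (x - \<alpha>))"
    using landau_o.big.mult_left[OF EwO, of "\<lambda>x. W x - \<alpha>"] by (simp add: power2_eq_square)
  with tay2[OF tW] have "(\<lambda>x. f (W x) - d * (W x - \<alpha>)) \<in> O[F1](\<lambda>x. (W x - \<alpha>) * (x - \<alpha>))"
    by (rule landau_o.big_trans)
  then have "(\<lambda>x. (x - \<alpha>) * (f (W x) - d * (W x - \<alpha>))) \<in> O[F1](\<lambda>x. (x - \<alpha>) * ((W x - \<alpha>) * (x - \<alpha>)))"
    by (rule landau_o.big.mult_left)
  then have c: "(\<lambda>x. d2 * ((x - \<alpha>) * (f (W x) - d * (W x - \<alpha>)))) \<in> O[F1](\<lambda>x. (x - \<alpha>)^2 * (W x - \<alpha>))"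
    by (intro bo_cmult) (simp add: power2_eq_square mult_ac)
  have N: "N \<in> O[F1](\<lambda>x. (x - \<alpha>)^2 * (W x - \<alpha>))"
    unfolding N_def by (rule sum_in_bigo(2)[OF sum_in_bigo(1)[OF a b] c])
  have "(\<lambda>x. N x / f (W x)) \<in> O[F1](\<lambda>x. (x - \<alpha>)^2 * (W x - \<alpha>) / (W x - \<alpha>))"
    by (rule bo_div[OF N fwT nzEw])
  moreover have "eventually (\<lambda>x. (x - \<alpha>)^2 * (W x - \<alpha>) / (W x - \<alpha>) = (x - \<alpha>)^2) F1"
    using nzEw by eventually_elim simp
  ultimately have q: "(\<lambda>x. N x / f (W x)) \<in> O[F1](\<lambda>x. (x - \<alpha>)^2)" by (rule bo_rhs[rotated])
  have "eventually (\<lambda>x. d * snd (T x) - d2 * (x - \<alpha>) = N x / f (W x)) F1"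
    using nzfw
  proof eventually_elim
    case (elim x)
    have "N x = d * f (Y x) - d2 * (x - \<alpha>) * f (W x)" using dnz
      by (simp add: N_def power2_eq_square field_simps)
    then show ?case using elim by (simp add: T_def field_simps)
  qed
  then show ?thesis by (rule bo_ev) (rule q)
qed

lemma EzO1:
  assumes hG: "(\<lambda>x. G (T x)) \<in> O[F1](\<lambda>_. 1)"
  shows "(\<lambda>x. Z x - \<alpha>) \<in> O[F1](\<lambda>x. (x - \<alpha>) * (W x - \<alpha>))"
proof -
  have "(\<lambda>x. f (Y x) / D1 x) \<in> O[F1](\<lambda>x. (x - \<alpha>) * (W x - \<alpha>) / 1)"
    by (rule bo_div[OF fyO D1th]) simp
  then have "(\<lambda>x. f (Y x) / D1 x) \<in> O[F1](\<lambda>x. (x - \<alpha>) * (W x - \<alpha>))" by simp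
  from landau_o.big_1_mult[OF this hG]
  have "(\<lambda>x. f (Y x) / D1 x * G (T x)) \<in> O[F1](\<lambda>x. (x - \<alpha>) * (W x - \<alpha>))" .
  from sum_in_bigo(2)[OF EyO this] show ?thesis by (simp add: Zeq algebra_simps)
qed

lemma EzO2:
  assumes hG: "(\<lambda>x. G (T x) - 1 - fst (T x) - snd (T x)) \<in> O[F1](\<lambda>x. (x - \<alpha>)^2)"
  shows "(\<lambda>x. Z x - \<alpha>) \<in> O[F1](\<lambda>x. (x - \<alpha>)^3 * (W x - \<alpha>))"
proof -
  define g where "g x = G (T x)" for x
  define rG where "rG x = G (T x) - 1 - fst (T x) - snd (T x)" for x
  have g1: "g \<in> O[F1](\<lambda>_. 1)"
  proof -
    have E2: "(\<lambda>x. (x - \<alpha>)^2) \<in> O[F1](\<lambda>_. 1)"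
      using bo_const1[OF tendsto_power[OF tE0, of 2]] .
    have "(\<lambda>x. rG x + 1 + fst (T x) + snd (T x)) \<in> O[F1](\<lambda>_. 1)"
      by (intro sum_in_bigo(1) landau_o.big_trans[OF hG[folded rG_def] E2] landau_o.big_refl
          landau_o.big_trans[OF t1O Ew1] landau_o.big_trans[OF t2O E1])
    then show ?thesis by (simp add: g_def [abs_def] rG_def)
  qed
  define A where "A x = (D1 x - (d + d2 * ((x - \<alpha>) + (W x - \<alpha>)))) - (d * fst (T x) - d2 * (W x - \<alpha>))
     - (d * snd (T x) - d2 * (x - \<alpha>))" for x
  have A: "A \<in> O[F1](\<lambda>x. (x - \<alpha>)^2)"
    unfolding A_def by (rule sum_in_bigo(2)[OF sum_in_bigo(2)[OF D1_exp t1d] t2d])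
  have a: "(\<lambda>x. (Y x - \<alpha>) * A x) \<in> O[F1](\<lambda>x. (x - \<alpha>)^3 * (W x - \<alpha>))"
    using landau_o.big.mult[OF EyO A] by (simp add: power2_eq_square power3_eq_cube mult_ac)
  have b: "(\<lambda>x. (f (Y x) - d * (Y x - \<alpha>)) * g x) \<in> O[F1](\<lambda>x. (x - \<alpha>)^3 * (W x - \<alpha>))"
    using landau_o.big_1_mult[OF landau_o.big_trans[OF fy2 EEw2'] g1] .
  have c: "(\<lambda>x. d * ((Y x - \<alpha>) * rG x)) \<in> O[F1](\<lambda>x. (x - \<alpha>)^3 * (W x - \<alpha>))"
    using landau_o.big.mult[OF EyO hG[folded rG_def]]
    by (intro bo_cmult) (simp add: power2_eq_square power3_eq_cube mult_ac)
  define N where "N x = (Y x - \<alpha>) * A x - (f (Y x) - d * (Y x - \<alpha>)) * g x - d * ((Y x - \<alpha>) * rG x)" for x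
  have N: "N \<in> O[F1](\<lambda>x. (x - \<alpha>)^3 * (W x - \<alpha>))"
    unfolding N_def by (rule sum_in_bigo(2)[OF sum_in_bigo(2)[OF a b] c])
  have q: "(\<lambda>x. N x / D1 x) \<in> O[F1](\<lambda>x. (x - \<alpha>)^3 * (W x - \<alpha>))"
    using bo_div[OF N D1th] by simp
  have "eventually (\<lambda>x. Z x - \<alpha> = N x / D1 x) F1"
    using nzD1
  proof eventually_elim
    case (elim x)
    have "N x = (Y x - \<alpha>) * D1 x - f (Y x) * g x"
      by (simp add: N_def A_def rG_def g_def algebra_simps)
    then show ?case using elim by (simp add: Zeq g_def field_simps)
  qed
  then show ?thesis by (rule bo_ev) (rule q)
qed

end

lemma psi_alg:
  fixes a b c f1 f2 f3 rx ry rw :: real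
  assumes nz: "a \<noteq> 0" "b \<noteq> 0" "c \<noteq> 0" "a \<noteq> b" "a \<noteq> c" "b \<noteq> c"
  shows "b*(b-c)/((a-b)*(a-c)) * ((f1*a + f2/2*((a-b)^2 - b^2) + f3/6*((a-b)^3 + b^3) + rx - ry)/a)
       + (-3*b^2+2*b*c+2*a*b-a*c)/((a-b)*(b-c)) * ((f1*b - f2/2*b^2 + f3/6*b^3 - ry)/b)
       + b*(b-a)/((a-c)*(b-c)) * ((f1*c + f2/2*((c-b)^2 - b^2) + f3/6*((c-b)^3 + b^3) + rw - ry)/c)
     = f1 + b*(b-c)/((a-b)*(a-c)) * ((rx - ry)/a) + (-3*b^2+2*b*c+2*a*b-a*c)/((a-b)*(b-c)) * ((0 - ry)/b)
       + b*(b-a)/((a-c)*(b-c)) * ((rw - ry)/c)"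
proof -
  define A where "A = b*(b-c)/((a-b)*(a-c))"
  define B where "B = (-3*b^2+2*b*c+2*a*b-a*c)/((a-b)*(b-c))"
  define C where "C = b*(b-a)/((a-c)*(b-c))"
  have ab: "a - b \<noteq> 0" "a - c \<noteq> 0" "b - c \<noteq> 0" using nz by auto
  have k1: "A + B + C = 1"
    unfolding A_def B_def C_def using ab
    by (simp add: divide_simps) ((simp add: algebra_simps power2_eq_square)?)
  have k2: "A * (a - 2*b) - B * b + C * (c - 2*b) = 0"
    unfolding A_def B_def C_def using ab
    by (simp add: divide_simps) ((simp add: algebra_simps power2_eq_square)?)
  have k3: "A * (a^2 - 3*a*b + 3*b^2) + B * b^2 + C * (c^2 - 3*b*c + 3*b^2) = 0"
    unfolding A_def B_def C_def using ab
    by (simp add: divide_simps) ((simp add: algebra_simps power2_eq_square)?)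
  have e1: "(f1*a + f2/2*((a-b)^2 - b^2) + f3/6*((a-b)^3 + b^3) + rx - ry)/a
     = f1 + f2/2*(a - 2*b) + f3/6*(a^2 - 3*a*b + 3*b^2) + (rx - ry)/a"
    using nz by (simp add: field_simps power2_eq_square power3_eq_cube) ((simp add: algebra_simps)?)
  have e2: "(f1*b - f2/2*b^2 + f3/6*b^3 - ry)/b = f1 - f2/2*b + f3/6*b^2 + (0 - ry)/b"
    using nz by (simp add: field_simps power2_eq_square power3_eq_cube)
  have e3: "(f1*c + f2/2*((c-b)^2 - b^2) + f3/6*((c-b)^3 + b^3) + rw - ry)/c
     = f1 + f2/2*(c - 2*b) + f3/6*(c^2 - 3*b*c + 3*b^2) + (rw - ry)/c"
    using nz by (simp add: field_simps power2_eq_square power3_eq_cube) ((simp add: algebra_simps)?)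
  have "A * (f1 + f2/2*(a - 2*b) + f3/6*(a^2 - 3*a*b + 3*b^2) + (rx - ry)/a)
      + B * (f1 - f2/2*b + f3/6*b^2 + (0 - ry)/b)
      + C * (f1 + f2/2*(c - 2*b) + f3/6*(c^2 - 3*b*c + 3*b^2) + (rw - ry)/c)
      = f1 * (A + B + C) + f2/2 * (A * (a - 2*b) - B * b + C * (c - 2*b))
        + f3/6 * (A * (a^2 - 3*a*b + 3*b^2) + B * b^2 + C * (c^2 - 3*b*c + 3*b^2))
        + (A * ((rx - ry)/a) + B * ((0 - ry)/b) + C * ((rw - ry)/c))"
    by (simp add: algebra_simps)
  also have "\<dots> = f1 + A * ((rx - ry)/a) + B * ((0 - ry)/b) + C * ((rw - ry)/c)"
    using k1 k2 k3 by simp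
  finally show ?thesis using e1 e2 e3 by (simp add: A_def B_def C_def)
qed


lemma c1: "(e::real) \<noteq> 0 \<Longrightarrow> (e*w)*w/(e*e) * (e^4/e) = e^2*w^2"
  by (simp add: field_simps eval_nat_numeral)
lemma c2: "(e::real) \<noteq> 0 \<Longrightarrow> w \<noteq> 0 \<Longrightarrow> e*w/(e*w) * (e*w)^3 = (e*w)*(e^2*w^2)"
  by (simp add: field_simps eval_nat_numeral)

lemma c3: "(e::real) \<noteq> 0 \<Longrightarrow> w \<noteq> 0 \<Longrightarrow> (e*w)*e/(e*w) * (w^4/w) = e*w^3"
  by (simp add: field_simps eval_nat_numeral)

lemma so1: "((f::'a\<Rightarrow>real) \<longlongrightarrow> 0) F \<Longrightarrow> f \<in> o[F](\<lambda>_. 1)"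
  by (rule smalloI_tendsto) auto

context iter_full
begin

definition "F2 = at \<alpha> within {x. W x \<noteq> \<alpha> \<and> Z x \<noteq> Y x}"

lemma F2_le: "F2 \<le> F1" unfolding F2_def F1_def by (rule at_le) auto

lemma O12: "u \<in> O[F1](g) \<Longrightarrow> u \<in> O[F2](g)"
  using landau_o.big.filter_mono[OF F2_le] .
lemma Th12: "u \<in> \<Theta>[F1](g) \<Longrightarrow> u \<in> \<Theta>[F2](g)"
  using landau_theta.filter_mono[OF F2_le] .
lemma ev12: "eventually Q F1 \<Longrightarrow> eventually Q F2"
  using filter_leD[OF F2_le] .

lemma nzb: "eventually (\<lambda>x. Z x - Y x \<noteq> 0) F2"
  unfolding F2_def by (simp add: eventually_at_filter)

lemma Ew_o1: "(\<lambda>x. W x - \<alpha>) \<in> o[F1](\<lambda>_. 1)" using so1[OF tEw0] .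
lemma E_o1: "(\<lambda>x. x - \<alpha>) \<in> o[F1](\<lambda>_. 1)" using so1[OF tE0] .

lemma EEw_oE: "(\<lambda>x. (x - \<alpha>) * (W x - \<alpha>)) \<in> o[F1](\<lambda>x. x - \<alpha>)"
  using landau_o.big_small_mult[OF landau_o.big_refl Ew_o1, of "\<lambda>x. x - \<alpha>"] by simp

lemma EEw_oEw: "(\<lambda>x. (x - \<alpha>) * (W x - \<alpha>)) \<in> o[F1](\<lambda>x. W x - \<alpha>)"
  using landau_o.small_big_mult[OF E_o1 landau_o.big_refl, of "\<lambda>x. W x - \<alpha>"] by simp

lemma tayZ:
  assumes hZ: "(Z \<longlongrightarrow> \<alpha>) F1" and v: "(v \<longlongrightarrow> \<alpha>) F1"
  shows "(\<lambda>x. f (v x) - (f (Z x) + deriv f (Z x) * (v x - Z x) + (deriv ^^ 2) f (Z x) / 2 * (v x - Z x)^2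
      + (deriv ^^ 3) f (Z x) / 6 * (v x - Z x)^3)) \<in> O[F1](\<lambda>x. (v x - Z x)^4)"
proof -
  have "\<And>x. (\<Sum>m<4. (deriv ^^ m) f (Z x) / fact m * (v x - Z x)^m) = f (Z x) + deriv f (Z x) * (v x - Z x) + (deriv ^^ 2) f (Z x) / 2 * (v x - Z x)^2
      + (deriv ^^ 3) f (Z x) / 6 * (v x - Z x)^3"
    by (simp add: eval_nat_numeral)
  then show ?thesis using taylor_O[of 4 Z F1 v] hZ v by simp
qed

lemma psi_err:
  assumes hZ: "(\<lambda>x. Z x - \<alpha>) \<in> O[F1](\<lambda>x. (x - \<alpha>) * (W x - \<alpha>))"
  shows "(\<lambda>x. psi f x (W x) (Y x) (Z x) - deriv f (Z x)) \<in> O[F2](\<lambda>x. (x - \<alpha>)^2 * (W x - \<alpha>)^2)"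
proof -
  have tZ: "(Z \<longlongrightarrow> \<alpha>) F1"
    using tendsto_add[OF bo_tendsto0[OF hZ tEEw] tendsto_const[of \<alpha>]] by simp
  define f1 where "f1 x = deriv f (Z x)" for x
  define f2 where "f2 x = (deriv ^^ 2) f (Z x)" for x
  define f3 where "f3 x = (deriv ^^ 3) f (Z x)" for x
  define R where "R v x = f (v x) - (f (Z x) + f1 x * (v x - Z x) + f2 x / 2 * (v x - Z x)^2
      + f3 x / 6 * (v x - Z x)^3)" for v :: "real \<Rightarrow> real" and x
  have Rv: "(\<lambda>x. R v x) \<in> O[F1](\<lambda>x. (v x - Z x)^4)" if "(v \<longlongrightarrow> \<alpha>) F1" for v
    unfolding R_def f1_def f2_def f3_def using tayZ[OF tZ that] .
  define na where "na x = x - Y x" for x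
  define nb where "nb x = Z x - Y x" for x
  define nc where "nc x = W x - Y x" for x
  have Ey_oE: "(\<lambda>x. Y x - \<alpha>) \<in> o[F1](\<lambda>x. x - \<alpha>)" using landau_o.big_small_trans[OF EyO EEw_oE] .
  have Ey_oEw: "(\<lambda>x. Y x - \<alpha>) \<in> o[F1](\<lambda>x. W x - \<alpha>)" using landau_o.big_small_trans[OF EyO EEw_oEw] .
  have Ez_oE: "(\<lambda>x. Z x - \<alpha>) \<in> o[F1](\<lambda>x. x - \<alpha>)" using landau_o.big_small_trans[OF hZ EEw_oE] .
  have Ez_oEw: "(\<lambda>x. Z x - \<alpha>) \<in> o[F1](\<lambda>x. W x - \<alpha>)" using landau_o.big_small_trans[OF hZ EEw_oEw] .
  have naT: "na \<in> \<Theta>[F2](\<lambda>x. x - \<alpha>)"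
    using Th12[OF theta_sub[OF Ey_oE]] by (simp add: na_def[abs_def])
  have nabT: "(\<lambda>x. na x - nb x) \<in> \<Theta>[F2](\<lambda>x. x - \<alpha>)"
    using Th12[OF theta_sub[OF Ez_oE]] by (simp add: na_def nb_def)
  have nacT: "(\<lambda>x. na x - nc x) \<in> \<Theta>[F2](\<lambda>x. x - \<alpha>)"
    using Th12[OF xWT] by (simp add: na_def nc_def)
  have ncT: "nc \<in> \<Theta>[F2](\<lambda>x. W x - \<alpha>)"
    using Th12[OF theta_sub[OF Ey_oEw]] by (simp add: nc_def[abs_def])
  have nbcT: "(\<lambda>x. nb x - nc x) \<in> \<Theta>[F2](\<lambda>x. W x - \<alpha>)"
  proof -
    have "(\<lambda>x. W x - Z x) \<in> \<Theta>[F2](\<lambda>x. W x - \<alpha>)"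
      using Th12[OF theta_sub[OF Ez_oEw]] by simp
    then have "(\<lambda>x. - (W x - Z x)) \<in> \<Theta>[F2](\<lambda>x. W x - \<alpha>)"
      by (subst landau_theta.uminus_in_iff)
    then show ?thesis by (simp add: nb_def nc_def)
  qed
  have nbO: "nb \<in> O[F2](\<lambda>x. (x - \<alpha>) * (W x - \<alpha>))"
    using O12[OF sum_in_bigo(2)[OF hZ EyO]] by (simp add: nb_def[abs_def])
  have YZO: "(\<lambda>x. Y x - Z x) \<in> O[F2](\<lambda>x. (x - \<alpha>) * (W x - \<alpha>))"
    using O12[OF sum_in_bigo(2)[OF EyO hZ]] by simp
  have nzE: "eventually (\<lambda>x. x - \<alpha> \<noteq> 0) F2" using ev12[OF nzE] .
  have nzEw: "eventually (\<lambda>x. W x - \<alpha> \<noteq> 0) F2" using ev12[OF nzEw] .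
  have nzb': "eventually (\<lambda>x. nb x \<noteq> 0) F2" using nzb by (simp add: nb_def)
  have E1: "(\<lambda>x. x - \<alpha>) \<in> O[F2](\<lambda>_. 1)" using O12[OF E1] .
  have Ew1: "(\<lambda>x. W x - \<alpha>) \<in> O[F2](\<lambda>_. 1)" using O12[OF Ew1] .
  have EwO: "(\<lambda>x. W x - \<alpha>) \<in> O[F2](\<lambda>x. x - \<alpha>)" using O12[OF EwO] .
  have EEw1: "(\<lambda>x. (x - \<alpha>) * (W x - \<alpha>)) \<in> O[F2](\<lambda>_. 1)"
    using landau_o.big.mult[OF E1 Ew1] by simp
  have Rx: "(\<lambda>x. R (\<lambda>x. x) x) \<in> O[F2](\<lambda>x. (x - \<alpha>)^4)"
  proof -
    have "(\<lambda>x. x - Z x) \<in> \<Theta>[F1](\<lambda>x. x - \<alpha>)" using theta_sub[OF Ez_oE] by simp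
    then have "(\<lambda>x. x - Z x) \<in> O[F2](\<lambda>x. x - \<alpha>)" using O12 by blast
    from landau_o.big_trans[OF O12[OF Rv[OF tE]] landau_o.big_power[OF this, of 4]] show ?thesis .
  qed
  have Ry4: "(\<lambda>x. R Y x) \<in> O[F2](\<lambda>x. (Y x - Z x)^4)" using O12[OF Rv[OF tY]] .
  have Ry: "(\<lambda>x. R Y x) \<in> O[F2](\<lambda>x. ((x - \<alpha>) * (W x - \<alpha>))^4)"
    using landau_o.big_trans[OF Ry4 landau_o.big_power[OF YZO, of 4]] .
  have RyE: "(\<lambda>x. R Y x) \<in> O[F2](\<lambda>x. (x - \<alpha>)^4)"
  proof -
    have "(\<lambda>x. (x - \<alpha>)^4 * (W x - \<alpha>)^4) \<in> O[F2](\<lambda>x. (x - \<alpha>)^4)"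
      proof -
        have pw: "(\<lambda>x. (W x - \<alpha>)^4) \<in> O[F2](\<lambda>_. 1)" using landau_o.big_power[OF Ew1, of 4] by simp
        show ?thesis using landau_o.big_1_mult[OF landau_o.big_refl pw] by simp
      qed
    with Ry show ?thesis by (simp add: power_mult_distrib) (rule landau_o.big_trans)
  qed
  have RyEw: "(\<lambda>x. R Y x) \<in> O[F2](\<lambda>x. (W x - \<alpha>)^4)"
  proof -
    have "(\<lambda>x. (W x - \<alpha>)^4 * (x - \<alpha>)^4) \<in> O[F2](\<lambda>x. (W x - \<alpha>)^4)"
      proof -
        have pw: "(\<lambda>x. (x - \<alpha>)^4) \<in> O[F2](\<lambda>_. 1)" using landau_o.big_power[OF E1, of 4] by simp
        show ?thesis using landau_o.big_1_mult[OF landau_o.big_refl pw] by simp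
      qed
    with Ry show ?thesis by (simp add: power_mult_distrib mult.commute) (rule landau_o.big_trans)
  qed
  have Rw: "(\<lambda>x. R W x) \<in> O[F2](\<lambda>x. (W x - \<alpha>)^4)"
  proof -
    have "(\<lambda>x. W x - Z x) \<in> \<Theta>[F1](\<lambda>x. W x - \<alpha>)" using theta_sub[OF Ez_oEw] by simp
    then have "(\<lambda>x. W x - Z x) \<in> O[F2](\<lambda>x. W x - \<alpha>)" using O12 by blast
    from landau_o.big_trans[OF O12[OF Rv[OF tW]] landau_o.big_power[OF this, of 4]] show ?thesis .
  qed
  have T1: "(\<lambda>x. nb x * (nb x - nc x) / ((na x - nb x) * (na x - nc x)) * ((R (\<lambda>x. x) x - R Y x) / na x))
      \<in> O[F2](\<lambda>x. (x - \<alpha>)^2 * (W x - \<alpha>)^2)"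
  proof -
    have "(\<lambda>x. nb x * (nb x - nc x)) \<in> O[F2](\<lambda>x. ((x - \<alpha>) * (W x - \<alpha>)) * (W x - \<alpha>))"
      using landau_o.big.mult[OF nbO bigthetaD1[OF nbcT]] .
    then have A: "(\<lambda>x. nb x * (nb x - nc x) / ((na x - nb x) * (na x - nc x)))
        \<in> O[F2](\<lambda>x. ((x - \<alpha>) * (W x - \<alpha>)) * (W x - \<alpha>) / ((x - \<alpha>) * (x - \<alpha>)))"
      using nzE by (intro bo_div landau_theta.mult nabT nacT) (auto elim: eventually_mono)
    have q: "(\<lambda>x. (R (\<lambda>x. x) x - R Y x) / na x) \<in> O[F2](\<lambda>x. (x - \<alpha>)^4 / (x - \<alpha>))"
      by (rule bo_div[OF sum_in_bigo(2)[OF Rx RyE] naT nzE])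
    have "eventually (\<lambda>x. ((x - \<alpha>) * (W x - \<alpha>)) * (W x - \<alpha>) / ((x - \<alpha>) * (x - \<alpha>)) * ((x - \<alpha>)^4 / (x - \<alpha>))
        = (x - \<alpha>)^2 * (W x - \<alpha>)^2) F2"
      using nzE by eventually_elim (rule c1)
    from bo_rhs[OF this landau_o.big.mult[OF A q]] show ?thesis .
  qed
  have T2: "(\<lambda>x. (-3*nb x^2+2*nb x*nc x+2*na x*nb x-na x*nc x)/((na x-nb x)*(nb x-nc x)) * ((0 - R Y x) / nb x))
      \<in> O[F2](\<lambda>x. (x - \<alpha>)^2 * (W x - \<alpha>)^2)"
  proof -
    have nbO': "nb \<in> O[F2](\<lambda>_. 1)" using landau_o.big_trans[OF nbO EEw1] .
    have ncO: "nc \<in> O[F2](\<lambda>x. W x - \<alpha>)" using ncT by blast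
    have naO: "na \<in> O[F2](\<lambda>x. x - \<alpha>)" using naT by blast
    have p1: "(\<lambda>x. nb x * nb x) \<in> O[F2](\<lambda>x. (x - \<alpha>) * (W x - \<alpha>))"
      using landau_o.big_1_mult[OF nbO nbO'] .
    have p2: "(\<lambda>x. nb x * nc x) \<in> O[F2](\<lambda>x. (x - \<alpha>) * (W x - \<alpha>))"
      using landau_o.big_1_mult[OF nbO landau_o.big_trans[OF ncO Ew1]] .
    have p3: "(\<lambda>x. na x * nb x) \<in> O[F2](\<lambda>x. (x - \<alpha>) * (W x - \<alpha>))"
    proof -
      have "(\<lambda>x. nb x * na x) \<in> O[F2](\<lambda>x. (x - \<alpha>) * (W x - \<alpha>))"
        using landau_o.big_1_mult[OF nbO landau_o.big_trans[OF naO E1]] .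
      then show ?thesis by (simp add: mult.commute)
    qed
    have p4: "(\<lambda>x. na x * nc x) \<in> O[F2](\<lambda>x. (x - \<alpha>) * (W x - \<alpha>))"
      using landau_o.big.mult[OF naO ncO] .
    have "(\<lambda>x. -3*(nb x * nb x)+2*(nb x*nc x)+2*(na x*nb x)-na x*nc x) \<in> O[F2](\<lambda>x. (x - \<alpha>) * (W x - \<alpha>))"
      by (intro sum_in_bigo bo_cmult p1 p2 p3 p4)
    then have "(\<lambda>x. -3*nb x^2+2*nb x*nc x+2*na x*nb x-na x*nc x) \<in> O[F2](\<lambda>x. (x - \<alpha>) * (W x - \<alpha>))"
      by (simp add: power2_eq_square mult.assoc)
    then have B: "(\<lambda>x. (-3*nb x^2+2*nb x*nc x+2*na x*nb x-na x*nc x)/((na x-nb x)*(nb x-nc x)))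
        \<in> O[F2](\<lambda>x. (x - \<alpha>) * (W x - \<alpha>) / ((x - \<alpha>) * (W x - \<alpha>)))"
      using nzE nzEw by (intro bo_div landau_theta.mult nabT nbcT) (auto intro!: eventually_conj)
    have "(\<lambda>x. (0 - R Y x) / nb x) \<in> O[F2](\<lambda>x. (Y x - Z x)^4 / nb x)"
      using Ry4 nzb' by (intro bo_div) auto
    moreover have "eventually (\<lambda>x. (Y x - Z x)^4 / nb x = - ((Y x - Z x)^3)) F2"
      using nzb' by eventually_elim (simp add: nb_def eval_nat_numeral field_simps)
    ultimately have "(\<lambda>x. (0 - R Y x) / nb x) \<in> O[F2](\<lambda>x. - ((Y x - Z x)^3))" by (rule bo_rhs[rotated])
    then have q: "(\<lambda>x. (0 - R Y x) / nb x) \<in> O[F2](\<lambda>x. ((x - \<alpha>) * (W x - \<alpha>))^3)"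
      using landau_o.big_power[OF YZO, of 3] by (simp) (rule landau_o.big_trans)
    have "eventually (\<lambda>x. (x - \<alpha>) * (W x - \<alpha>) / ((x - \<alpha>) * (W x - \<alpha>)) * ((x - \<alpha>) * (W x - \<alpha>))^3
        = ((x - \<alpha>) * (W x - \<alpha>)) * ((x - \<alpha>)^2 * (W x - \<alpha>)^2)) F2"
      using nzE nzEw by eventually_elim (rule c2)
    from bo_rhs[OF this landau_o.big.mult[OF B q]]
    have "(\<lambda>x. (-3*nb x^2+2*nb x*nc x+2*na x*nb x-na x*nc x)/((na x-nb x)*(nb x-nc x)) * ((0 - R Y x) / nb x))
      \<in> O[F2](\<lambda>x. ((x - \<alpha>) * (W x - \<alpha>)) * ((x - \<alpha>)^2 * (W x - \<alpha>)^2))" .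
    moreover have "(\<lambda>x. ((x - \<alpha>) * (W x - \<alpha>)) * ((x - \<alpha>)^2 * (W x - \<alpha>)^2)) \<in> O[F2](\<lambda>x. (x - \<alpha>)^2 * (W x - \<alpha>)^2)"
      using landau_o.big_1_mult[OF landau_o.big_refl EEw1, of "\<lambda>x. (x - \<alpha>)^2 * (W x - \<alpha>)^2"] by (simp add: mult.commute)
    ultimately show ?thesis by (rule landau_o.big_trans)
  qed
  have T3: "(\<lambda>x. nb x * (nb x - na x) / ((na x - nc x) * (nb x - nc x)) * ((R W x - R Y x) / nc x))
      \<in> O[F2](\<lambda>x. (x - \<alpha>)^2 * (W x - \<alpha>)^2)"
  proof -
    have "(\<lambda>x. - (na x - nb x)) \<in> O[F2](\<lambda>x. x - \<alpha>)"
      by (subst landau_o.big.uminus_in_iff) (rule bigthetaD1[OF nabT])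
    then have nba: "(\<lambda>x. nb x - na x) \<in> O[F2](\<lambda>x. x - \<alpha>)" by simp
    have C: "(\<lambda>x. nb x * (nb x - na x) / ((na x - nc x) * (nb x - nc x)))
        \<in> O[F2](\<lambda>x. ((x - \<alpha>) * (W x - \<alpha>)) * (x - \<alpha>) / ((x - \<alpha>) * (W x - \<alpha>)))"
      using nzE nzEw by (intro bo_div landau_o.big.mult nbO nba landau_theta.mult nacT nbcT) (auto intro!: eventually_conj)
    have q: "(\<lambda>x. (R W x - R Y x) / nc x) \<in> O[F2](\<lambda>x. (W x - \<alpha>)^4 / (W x - \<alpha>))"
      by (rule bo_div[OF sum_in_bigo(2)[OF Rw RyEw] ncT nzEw])
    have "eventually (\<lambda>x. ((x - \<alpha>) * (W x - \<alpha>)) * (x - \<alpha>) / ((x - \<alpha>) * (W x - \<alpha>)) * ((W x - \<alpha>)^4 / (W x - \<alpha>))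
        = (x - \<alpha>) * (W x - \<alpha>)^3) F2"
      using nzE nzEw by eventually_elim (rule c3)
    from bo_rhs[OF this landau_o.big.mult[OF C q]]
    have "(\<lambda>x. nb x * (nb x - na x) / ((na x - nc x) * (nb x - nc x)) * ((R W x - R Y x) / nc x))
      \<in> O[F2](\<lambda>x. (x - \<alpha>) * (W x - \<alpha>)^3)" .
    moreover have "(\<lambda>x. (x - \<alpha>) * (W x - \<alpha>) * (W x - \<alpha>)^2) \<in> O[F2](\<lambda>x. (x - \<alpha>) * (x - \<alpha>) * (W x - \<alpha>)^2)"
      by (intro landau_o.big.mult landau_o.big_refl EwO)
    then have "(\<lambda>x. (x - \<alpha>) * (W x - \<alpha>)^3) \<in> O[F2](\<lambda>x. (x - \<alpha>)^2 * (W x - \<alpha>)^2)"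
      by (simp add: power2_eq_square power3_eq_cube mult_ac)
    ultimately show ?thesis by (rule landau_o.big_trans)
  qed
  have ev_na: "eventually (\<lambda>x. na x \<noteq> 0) F2" using eventually_nonzero_bigtheta[OF naT] nzE by blast
  have ev_nab: "eventually (\<lambda>x. na x - nb x \<noteq> 0) F2" using eventually_nonzero_bigtheta[OF nabT] nzE by blast
  have ev_nac: "eventually (\<lambda>x. na x - nc x \<noteq> 0) F2" using eventually_nonzero_bigtheta[OF nacT] nzE by blast
  have ev_nc: "eventually (\<lambda>x. nc x \<noteq> 0) F2" using eventually_nonzero_bigtheta[OF ncT] nzEw by blast
  have ev_nbc: "eventually (\<lambda>x. nb x - nc x \<noteq> 0) F2" using eventually_nonzero_bigtheta[OF nbcT] nzEw by blast
  have "eventually (\<lambda>x. psi f x (W x) (Y x) (Z x) - deriv f (Z x) =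
      nb x * (nb x - nc x) / ((na x - nb x) * (na x - nc x)) * ((R (\<lambda>x. x) x - R Y x) / na x)
    + (-3*nb x^2+2*nb x*nc x+2*na x*nb x-na x*nc x)/((na x-nb x)*(nb x-nc x)) * ((0 - R Y x) / nb x)
    + nb x * (nb x - na x) / ((na x - nc x) * (nb x - nc x)) * ((R W x - R Y x) / nc x)) F2"
    using ev_na ev_nab ev_nac ev_nc ev_nbc nzb'
  proof eventually_elim
    case (elim x)
    have v1: "f x - f (Y x) = f1 x * na x + f2 x/2*((na x - nb x)^2 - nb x^2) + f3 x/6*((na x - nb x)^3 + nb x^3) + R (\<lambda>x. x) x - R Y x"
      unfolding R_def na_def nb_def by (simp add: power2_eq_square power3_eq_cube algebra_simps)
    have v2: "f (Z x) - f (Y x) = f1 x * nb x - f2 x/2*nb x^2 + f3 x/6*nb x^3 - R Y x"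
      unfolding R_def na_def nb_def by (simp add: power2_eq_square power3_eq_cube algebra_simps)
    have v3: "f (W x) - f (Y x) = f1 x * nc x + f2 x/2*((nc x - nb x)^2 - nb x^2) + f3 x/6*((nc x - nb x)^3 + nb x^3) + R W x - R Y x"
      unfolding R_def nc_def nb_def by (simp add: power2_eq_square power3_eq_cube algebra_simps)
    have ps: "psi f x (W x) (Y x) (Z x) = nb x*(nb x-nc x)/((na x-nb x)*(na x-nc x)) * ((f x - f (Y x))/na x)
       + (-3*nb x^2+2*nb x*nc x+2*na x*nb x-na x*nc x)/((na x-nb x)*(nb x-nc x)) * ((f (Z x) - f (Y x))/nb x)
       + nb x*(nb x-na x)/((na x-nc x)*(nb x-nc x)) * ((f (W x) - f (Y x))/nc x)"
      unfolding psi_def Let_def na_def nb_def nc_def by simp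
    have nzs: "na x \<noteq> nb x" "na x \<noteq> nc x" "nb x \<noteq> nc x" using elim by auto
    show ?case unfolding ps v1 v2 v3
      using psi_alg[OF elim(1) elim(6) elim(4) nzs, of "f1 x" "f2 x" "f3 x" "R (\<lambda>x. x) x" "R Y x" "R W x"]
      by (simp add: f1_def)
  qed
  then show ?thesis by (rule bo_ev) (rule sum_in_bigo(1)[OF sum_in_bigo(1)[OF T1 T2] T3])
qed

end

lemma bigO_extract:
  fixes u g :: "real \<Rightarrow> real"
  assumes "u \<in> O[at a within S](g)"
  shows "\<exists>\<delta>>0. \<exists>c>0. \<forall>x\<in>S. x \<noteq> a \<and> \<bar>x - a\<bar> < \<delta> \<longrightarrow> \<bar>u x\<bar> \<le> c * \<bar>g x\<bar>"
proof -
  from assms obtain c where c: "c > 0" "eventually (\<lambda>x. norm (u x) \<le> c * norm (g x)) (at a within S)"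
    by (elim landau_o.bigE)
  from c(2) obtain \<delta> where "\<delta> > 0" "\<forall>x\<in>S. x \<noteq> a \<and> dist x a < \<delta> \<longrightarrow> norm (u x) \<le> c * norm (g x)"
    unfolding eventually_at by blast
  then show ?thesis using c(1) by (intro exI[of _ \<delta>] conjI exI[of _ c]) (auto simp: dist_real_def)
qed

lemma normsq: "norm (v::real\<times>real)^2 = fst v^2 + snd v^2"
  by (cases v) (simp add: norm_Pair)

context iter_full
begin

definition "Sv x = (f (Z x) / f x, f (Z x) / f (W x))"
definition "St x = Z x - f (Z x) / psi f x (W x) (Y x) (Z x) * H (Sv x)"

lemma step_eq: "step \<kappa> f G H x = St x"
  unfolding step_def St_def Sv_def Z_def T_def Y_def W_def Let_def by (rule refl)

lemma Y_alpha: "Y x = \<alpha> \<Longrightarrow> St x = \<alpha>"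
  by (simp add: St_def Z_def f0)

lemma W_alpha: "W x = \<alpha> \<Longrightarrow> St x = \<alpha>"
proof -
  assume w: "W x = \<alpha>"
  have "Y x = \<alpha>"
  proof (cases "f x = 0")
    case True then show ?thesis using w by (simp add: Y_def W_def)
  next
    case False
    then have "Y x = x - \<kappa> * f x" using w by (simp add: Y_def f0 power2_eq_square)
    then show ?thesis using w by (simp add: W_def)
  qed
  then show ?thesis by (rule Y_alpha)
qed

lemma x_alpha: "St \<alpha> = \<alpha>"
  by (rule W_alpha) (simp add: W_def f0)

lemma b0: "Z x = Y x \<Longrightarrow> St x = Z x"
  by (simp add: St_def psi_def Let_def)

lemma tZ_of:
  assumes "(\<lambda>x. Z x - \<alpha>) \<in> O[F1](\<lambda>x. (x - \<alpha>) * (W x - \<alpha>))"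
  shows "(Z \<longlongrightarrow> \<alpha>) F1"
  using tendsto_add[OF bo_tendsto0[OF assms tEEw] tendsto_const[of \<alpha>]] by simp

lemma f1T: "(Z \<longlongrightarrow> \<alpha>) F1 \<Longrightarrow> ((\<lambda>x. deriv f (Z x)) \<longlongrightarrow> d) F1"
  using isCont_tendsto_compose[OF cont_derivs[OF D(2), of 1]] by (simp add: d_def)

lemma psiT:
  assumes hZ: "(\<lambda>x. Z x - \<alpha>) \<in> O[F1](\<lambda>x. (x - \<alpha>) * (W x - \<alpha>))"
  shows "((\<lambda>x. psi f x (W x) (Y x) (Z x)) \<longlongrightarrow> d) F2"
proof -
  have "((\<lambda>x. (x - \<alpha>)^2 * (W x - \<alpha>)^2) \<longlongrightarrow> 0^2 * 0^2) F1"
    by (intro tendsto_mult tendsto_power tE0 tEw0)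
  then have "((\<lambda>x. (x - \<alpha>)^2 * (W x - \<alpha>)^2) \<longlongrightarrow> 0) F2"
    using tendsto_mono[OF F2_le] by simp
  from bo_tendsto0[OF psi_err[OF hZ] this]
  have "((\<lambda>x. psi f x (W x) (Y x) (Z x) - deriv f (Z x)) \<longlongrightarrow> 0) F2" .
  from tendsto_add[OF this tendsto_mono[OF F2_le f1T[OF tZ_of[OF hZ]]]] show ?thesis by simp
qed

lemma SvT:
  assumes hZ: "(\<lambda>x. Z x - \<alpha>) \<in> O[F1](\<lambda>x. (x - \<alpha>) * (W x - \<alpha>))"
  shows "(Sv \<longlongrightarrow> (0,0)) F1"
proof -
  have fz: "(\<lambda>x. f (Z x)) \<in> O[F1](\<lambda>x. (x - \<alpha>) * (W x - \<alpha>))"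
    using landau_o.big_trans[OF tay1[OF tZ_of[OF hZ]] hZ] .
  have "(\<lambda>x. f (Z x) / f x) \<in> O[F1](\<lambda>x. (x - \<alpha>) * (W x - \<alpha>) / (x - \<alpha>))"
    by (rule bo_div[OF fz fxT nzE])
  moreover have "eventually (\<lambda>x. (x - \<alpha>) * (W x - \<alpha>) / (x - \<alpha>) = W x - \<alpha>) F1"
    using nzE by eventually_elim simp
  ultimately have s1: "(\<lambda>x. f (Z x) / f x) \<in> O[F1](\<lambda>x. W x - \<alpha>)" by (rule bo_rhs[rotated])
  have "(\<lambda>x. f (Z x) / f (W x)) \<in> O[F1](\<lambda>x. (x - \<alpha>) * (W x - \<alpha>) / (W x - \<alpha>))"
    by (rule bo_div[OF fz fwT nzEw])
  moreover have "eventually (\<lambda>x. (x - \<alpha>) * (W x - \<alpha>) / (W x - \<alpha>) = x - \<alpha>) F1"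
    using nzEw by eventually_elim simp
  ultimately have s2: "(\<lambda>x. f (Z x) / f (W x)) \<in> O[F1](\<lambda>x. x - \<alpha>)" by (rule bo_rhs[rotated])
  have "((\<lambda>x. (f (Z x) / f x, f (Z x) / f (W x))) \<longlongrightarrow> (0,0)) F1"
    by (intro tendsto_Pair bo_tendsto0[OF s1 tEw0] bo_tendsto0[OF s2 tE0])
  then show ?thesis by (simp add: Sv_def[abs_def])
qed

lemma part1:
  assumes sG: "smooth2_near0 G" and sH: "smooth2_near0 H"
  shows "\<exists>\<delta>>0. \<exists>C. \<forall>x. \<bar>x - \<alpha>\<bar> < \<delta> \<longrightarrow> \<bar>St x - \<alpha>\<bar> \<le> C * \<bar>x - \<alpha>\<bar>^2"
proof -
  have hG: "(\<lambda>x. G (T x)) \<in> O[F1](\<lambda>_. 1)"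
    by (rule bo_const1[OF isCont_tendsto_compose[OF smooth2_cont[OF sG] tT]])
  have hZ: "(\<lambda>x. Z x - \<alpha>) \<in> O[F1](\<lambda>x. (x - \<alpha>) * (W x - \<alpha>))" by (rule EzO1[OF hG])
  have EEw_E2: "(\<lambda>x. (x - \<alpha>) * (W x - \<alpha>)) \<in> O[F1](\<lambda>x. (x - \<alpha>)^2)"
    using landau_o.big.mult[OF landau_o.big_refl EwO, of "\<lambda>x. x - \<alpha>"] by (simp add: power2_eq_square)
  have Z2: "(\<lambda>x. Z x - \<alpha>) \<in> O[F1](\<lambda>x. (x - \<alpha>)^2)" using landau_o.big_trans[OF hZ EEw_E2] .
  have hH: "(\<lambda>x. H (Sv x)) \<in> O[F1](\<lambda>_. 1)"
    by (rule bo_const1[OF isCont_tendsto_compose[OF smooth2_cont[OF sH] SvT[OF hZ]]])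
  have psT: "(\<lambda>x. psi f x (W x) (Y x) (Z x)) \<in> \<Theta>[F2](\<lambda>_. 1)"
    using psiT[OF hZ] by (intro bigthetaI_tendsto[OF dnz]) simp
  have fz: "(\<lambda>x. f (Z x)) \<in> O[F2](\<lambda>x. (x - \<alpha>)^2)"
    using O12[OF landau_o.big_trans[OF tay1[OF tZ_of[OF hZ]] Z2]] .
  have "(\<lambda>x. f (Z x) / psi f x (W x) (Y x) (Z x)) \<in> O[F2](\<lambda>x. (x - \<alpha>)^2 / 1)"
    by (rule bo_div[OF fz psT]) simp
  then have "(\<lambda>x. f (Z x) / psi f x (W x) (Y x) (Z x)) \<in> O[F2](\<lambda>x. (x - \<alpha>)^2)" by simp
  from landau_o.big_1_mult[OF this O12[OF hH]]
  have "(\<lambda>x. f (Z x) / psi f x (W x) (Y x) (Z x) * H (Sv x)) \<in> O[F2](\<lambda>x. (x - \<alpha>)^2)" .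
  from sum_in_bigo(2)[OF O12[OF Z2] this]
  have St2: "(\<lambda>x. St x - \<alpha>) \<in> O[F2](\<lambda>x. (x - \<alpha>)^2)" by (simp add: St_def algebra_simps)
  obtain \<delta>1 c1 where d1: "\<delta>1 > 0" "c1 > 0" "\<forall>x\<in>{x. W x \<noteq> \<alpha>}. x \<noteq> \<alpha> \<and> \<bar>x - \<alpha>\<bar> < \<delta>1 \<longrightarrow> \<bar>Z x - \<alpha>\<bar> \<le> c1 * \<bar>(x - \<alpha>)^2\<bar>"
    using bigO_extract[OF Z2[unfolded F1_def]] by blast
  obtain \<delta>2 c2 where d2: "\<delta>2 > 0" "c2 > 0" "\<forall>x\<in>{x. W x \<noteq> \<alpha> \<and> Z x \<noteq> Y x}. x \<noteq> \<alpha> \<and> \<bar>x - \<alpha>\<bar> < \<delta>2 \<longrightarrow> \<bar>St x - \<alpha>\<bar> \<le> c2 * \<bar>(x - \<alpha>)^2\<bar>"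
    using bigO_extract[OF St2[unfolded F2_def]] by blast
  have main: "\<forall>x. \<bar>x - \<alpha>\<bar> < min \<delta>1 \<delta>2 \<longrightarrow> \<bar>St x - \<alpha>\<bar> \<le> max c1 c2 * \<bar>x - \<alpha>\<bar>^2"
  proof (intro allI impI)
    fix x assume x: "\<bar>x - \<alpha>\<bar> < min \<delta>1 \<delta>2"
    have sq: "0 \<le> \<bar>x - \<alpha>\<bar>^2" by simp
    show "\<bar>St x - \<alpha>\<bar> \<le> max c1 c2 * \<bar>x - \<alpha>\<bar>^2"
    proof (cases "x = \<alpha> \<or> W x = \<alpha>")
      case True
      then have "St x = \<alpha>" using W_alpha x_alpha by blast
      moreover have "0 \<le> max c1 c2 * \<bar>x - \<alpha>\<bar>^2" using d1(2) sq by (intro mult_nonneg_nonneg) auto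
      ultimately show ?thesis by simp
    next
      case False
      show ?thesis
      proof (cases "Z x = Y x")
        case True
        then have "\<bar>St x - \<alpha>\<bar> \<le> c1 * \<bar>(x - \<alpha>)^2\<bar>" using d1(3) False x b0[OF True] by auto
        also have "\<dots> \<le> max c1 c2 * \<bar>x - \<alpha>\<bar>^2" by (simp add: mult_right_mono power_abs)
        finally show ?thesis .
      next
        case Zf: False
        then have "\<bar>St x - \<alpha>\<bar> \<le> c2 * \<bar>(x - \<alpha>)^2\<bar>" using d2(3) False x Zf by auto
        also have "\<dots> \<le> max c1 c2 * \<bar>x - \<alpha>\<bar>^2" by (simp add: mult_right_mono power_abs)
        finally show ?thesis .
      qed
    qed
  qed
  have "min \<delta>1 \<delta>2 > 0" using d1 d2 by simp
  with main show ?thesis by blast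
qed

lemma part2:
  assumes sG: "smooth2_near0 G" and sH: "smooth2_near0 H"
    and G0: "G (0,0) = 1" and G1: "((\<lambda>t. G (t,0)) has_real_derivative 1) (at 0)"
    and G2: "((\<lambda>t. G (0,t)) has_real_derivative 1) (at 0)"
    and H0: "H (0,0) = 1" and H1: "((\<lambda>s. H (s,0)) has_real_derivative 0) (at 0)"
    and H2: "((\<lambda>s. H (0,s)) has_real_derivative 0) (at 0)"
  shows "\<exists>\<delta>>0. \<exists>C. \<forall>x. \<bar>x - \<alpha>\<bar> < \<delta> \<longrightarrow> \<bar>St x - \<alpha>\<bar> \<le> C * \<bar>x - \<alpha>\<bar>^8"
proof -
  have E2_1: "(\<lambda>x. (x - \<alpha>)^2) \<in> O[F1](\<lambda>_. 1)" using bo_const1[OF tendsto_power[OF tE0, of 2]] .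
  have normT: "(\<lambda>x. norm (T x)^2) \<in> O[F1](\<lambda>x. (x - \<alpha>)^2)"
  proof -
    have a: "(\<lambda>x. fst (T x)^2) \<in> O[F1](\<lambda>x. (x - \<alpha>)^2)"
      using landau_o.big_power[OF landau_o.big_trans[OF t1O EwO], of 2] .
    have b: "(\<lambda>x. snd (T x)^2) \<in> O[F1](\<lambda>x. (x - \<alpha>)^2)"
      using landau_o.big_power[OF t2O, of 2] .
    show ?thesis using sum_in_bigo(1)[OF a b] by (simp add: normsq)
  qed
  have "(\<lambda>x. G (T x) - G (0,0) - 1 * fst (T x) - 1 * snd (T x)) \<in> O[F1](\<lambda>x. norm (T x)^2)"
    using landau_o.big.compose[OF second_order[OF sG G1 G2] tT] .
  then have hG: "(\<lambda>x. G (T x) - 1 - fst (T x) - snd (T x)) \<in> O[F1](\<lambda>x. (x - \<alpha>)^2)"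
    using normT G0 by simp (rule landau_o.big_trans)
  have hZ2: "(\<lambda>x. Z x - \<alpha>) \<in> O[F1](\<lambda>x. (x - \<alpha>)^3 * (W x - \<alpha>))" by (rule EzO2[OF hG])
  have hZ: "(\<lambda>x. Z x - \<alpha>) \<in> O[F1](\<lambda>x. (x - \<alpha>) * (W x - \<alpha>))"
  proof -
    have "(\<lambda>x. ((x - \<alpha>) * (W x - \<alpha>)) * (x - \<alpha>)^2) \<in> O[F1](\<lambda>x. (x - \<alpha>) * (W x - \<alpha>))"
      by (rule landau_o.big_1_mult[OF landau_o.big_refl E2_1])
    then have "(\<lambda>x. (x - \<alpha>)^3 * (W x - \<alpha>)) \<in> O[F1](\<lambda>x. (x - \<alpha>) * (W x - \<alpha>))"
      by (simp add: power2_eq_square power3_eq_cube mult_ac)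
    with hZ2 show ?thesis by (rule landau_o.big_trans)
  qed
  have E3Ew: "(\<lambda>x. (x - \<alpha>)^3 * (W x - \<alpha>)) \<in> O[F1](\<lambda>x. (x - \<alpha>)^4)"
    using landau_o.big.mult[OF landau_o.big_refl EwO, of "\<lambda>x. (x - \<alpha>)^3"] by (simp add: eval_nat_numeral mult_ac)
  have Ez4: "(\<lambda>x. Z x - \<alpha>) \<in> O[F1](\<lambda>x. (x - \<alpha>)^4)" using landau_o.big_trans[OF hZ2 E3Ew] .
  have tZ: "(Z \<longlongrightarrow> \<alpha>) F1" by (rule tZ_of[OF hZ])
  have fzZ: "(\<lambda>x. f (Z x)) \<in> O[F1](\<lambda>x. Z x - \<alpha>)" using tay1[OF tZ] .
  have fz3: "(\<lambda>x. f (Z x)) \<in> O[F1](\<lambda>x. (x - \<alpha>)^3 * (W x - \<alpha>))" using landau_o.big_trans[OF fzZ hZ2] .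
  have fz4: "(\<lambda>x. f (Z x)) \<in> O[F1](\<lambda>x. (x - \<alpha>)^4)" using landau_o.big_trans[OF fzZ Ez4] .
  have normSv: "(\<lambda>x. norm (Sv x)^2) \<in> O[F1](\<lambda>x. (x - \<alpha>)^4)"
  proof -
    have "(\<lambda>x. f (Z x) / f x) \<in> O[F1](\<lambda>x. (x - \<alpha>)^3 * (W x - \<alpha>) / (x - \<alpha>))"
      by (rule bo_div[OF fz3 fxT nzE])
    moreover have "eventually (\<lambda>x. (x - \<alpha>)^3 * (W x - \<alpha>) / (x - \<alpha>) = (x - \<alpha>)^2 * (W x - \<alpha>)) F1"
      using nzE by eventually_elim (simp add: eval_nat_numeral)
    ultimately have "(\<lambda>x. f (Z x) / f x) \<in> O[F1](\<lambda>x. (x - \<alpha>)^2 * (W x - \<alpha>))" by (rule bo_rhs[rotated])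
    then have s1: "(\<lambda>x. f (Z x) / f x) \<in> O[F1](\<lambda>x. (x - \<alpha>)^2)"
      using landau_o.big_1_mult[OF landau_o.big_refl Ew1, of "\<lambda>x. (x - \<alpha>)^2"] by (rule landau_o.big_trans)
    have "(\<lambda>x. f (Z x) / f (W x)) \<in> O[F1](\<lambda>x. (x - \<alpha>)^3 * (W x - \<alpha>) / (W x - \<alpha>))"
      by (rule bo_div[OF fz3 fwT nzEw])
    moreover have "eventually (\<lambda>x. (x - \<alpha>)^3 * (W x - \<alpha>) / (W x - \<alpha>) = (x - \<alpha>)^3) F1"
      using nzEw by eventually_elim simp
    ultimately have "(\<lambda>x. f (Z x) / f (W x)) \<in> O[F1](\<lambda>x. (x - \<alpha>)^3)" by (rule bo_rhs[rotated])
    then have s2: "(\<lambda>x. f (Z x) / f (W x)) \<in> O[F1](\<lambda>x. (x - \<alpha>)^2)" using E3 by (rule landau_o.big_trans)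
    have "(\<lambda>x. (f (Z x) / f x)^2 + (f (Z x) / f (W x))^2) \<in> O[F1](\<lambda>x. ((x - \<alpha>)^2)^2)"
      by (rule sum_in_bigo(1)[OF landau_o.big_power[OF s1] landau_o.big_power[OF s2]])
    then show ?thesis by (simp add: normsq Sv_def power_mult[symmetric])
  qed
  have "(\<lambda>x. H (Sv x) - H (0,0) - 0 * fst (Sv x) - 0 * snd (Sv x)) \<in> O[F1](\<lambda>x. norm (Sv x)^2)"
    using landau_o.big.compose[OF second_order[OF sH H1 H2] SvT[OF hZ]] .
  then have hH: "(\<lambda>x. H (Sv x) - 1) \<in> O[F1](\<lambda>x. (x - \<alpha>)^4)"
    using normSv H0 by simp (rule landau_o.big_trans)
  have psT: "(\<lambda>x. psi f x (W x) (Y x) (Z x)) \<in> \<Theta>[F2](\<lambda>_. 1)"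
    using psiT[OF hZ] by (intro bigthetaI_tendsto[OF dnz]) simp
  have pe4: "(\<lambda>x. psi f x (W x) (Y x) (Z x) - deriv f (Z x)) \<in> O[F2](\<lambda>x. (x - \<alpha>)^4)"
  proof -
    have "(\<lambda>x. (x - \<alpha>)^2 * (W x - \<alpha>)^2) \<in> O[F1](\<lambda>x. (x - \<alpha>)^2 * (x - \<alpha>)^2)"
      by (intro landau_o.big.mult landau_o.big_refl landau_o.big_power EwO)
    then have "(\<lambda>x. (x - \<alpha>)^2 * (W x - \<alpha>)^2) \<in> O[F2](\<lambda>x. (x - \<alpha>)^4)"
      by (intro O12) (simp add: power_add[symmetric])
    with psi_err[OF hZ] show ?thesis by (rule landau_o.big_trans)
  qed
  have N1: "(\<lambda>x. (Z x - \<alpha>) * (psi f x (W x) (Y x) (Z x) - deriv f (Z x))) \<in> O[F2](\<lambda>x. (x - \<alpha>)^8)"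
    using landau_o.big.mult[OF O12[OF Ez4] pe4] by (simp add: power_add[symmetric])
  have N2: "(\<lambda>x. (Z x - \<alpha>) * deriv f (Z x) - f (Z x)) \<in> O[F2](\<lambda>x. (x - \<alpha>)^8)"
  proof -
    have "(\<lambda>x. f \<alpha> - (\<Sum>m<2. (deriv ^^ m) f (Z x) / fact m * (\<alpha> - Z x)^m)) \<in> O[F1](\<lambda>x. (\<alpha> - Z x)^2)"
      using taylor_O[of 2 Z F1 "\<lambda>_. \<alpha>"] tZ by simp
    then have "(\<lambda>x. (Z x - \<alpha>) * deriv f (Z x) - f (Z x)) \<in> O[F1](\<lambda>x. (Z x - \<alpha>)^2)"
      by (simp add: eval_nat_numeral f0 algebra_simps power2_eq_square)
    moreover have "(\<lambda>x. (Z x - \<alpha>)^2) \<in> O[F1](\<lambda>x. (x - \<alpha>)^8)"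
      using landau_o.big_power[OF Ez4, of 2] by (simp add: power_mult[symmetric])
    ultimately show ?thesis by (intro O12) (rule landau_o.big_trans)
  qed
  have N3: "(\<lambda>x. f (Z x) * (1 - H (Sv x))) \<in> O[F2](\<lambda>x. (x - \<alpha>)^8)"
  proof -
    have "(\<lambda>x. - (H (Sv x) - 1)) \<in> O[F1](\<lambda>x. (x - \<alpha>)^4)"
      by (subst landau_o.big.uminus_in_iff) (rule hH)
    from landau_o.big.mult[OF fz4 this]
    show ?thesis by (intro O12) (simp add: power_add[symmetric])
  qed
  define N where "N x = (Z x - \<alpha>) * (psi f x (W x) (Y x) (Z x) - deriv f (Z x))
      + ((Z x - \<alpha>) * deriv f (Z x) - f (Z x)) + f (Z x) * (1 - H (Sv x))" for x
  have N: "N \<in> O[F2](\<lambda>x. (x - \<alpha>)^8)"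
    unfolding N_def by (rule sum_in_bigo(1)[OF sum_in_bigo(1)[OF N1 N2] N3])
  have q: "(\<lambda>x. N x / psi f x (W x) (Y x) (Z x)) \<in> O[F2](\<lambda>x. (x - \<alpha>)^8)"
    using bo_div[OF N psT] by simp
  have "eventually (\<lambda>x. psi f x (W x) (Y x) (Z x) \<noteq> 0) F2"
    using eventually_nonzero_bigtheta[OF psT] by simp
  then have "eventually (\<lambda>x. St x - \<alpha> = N x / psi f x (W x) (Y x) (Z x)) F2"
    by eventually_elim (simp add: St_def N_def field_simps)
  then have St8: "(\<lambda>x. St x - \<alpha>) \<in> O[F2](\<lambda>x. (x - \<alpha>)^8)" by (rule bo_ev) (rule q)
  have evZY: "eventually (\<lambda>x. Z x = Y x \<longrightarrow> Z x = \<alpha>) F1"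
  proof -
    have "((\<lambda>x. G (T x)) \<longlongrightarrow> 1) F1"
      using isCont_tendsto_compose[OF smooth2_cont[OF sG] tT] G0 by simp
    then have eG: "eventually (\<lambda>x. 1/2 < G (T x)) F1" by (rule order_tendstoD) simp
    have "f \<in> \<Theta>[at \<alpha>](\<lambda>y. y - \<alpha>)" using bigthetaI_tendsto[OF dnz fdiff] .
    moreover have "eventually (\<lambda>y. y - \<alpha> \<noteq> 0) (at \<alpha>)" by (simp add: eventually_at_filter)
    ultimately have "eventually (\<lambda>y. f y \<noteq> 0) (at \<alpha>)" using eventually_nonzero_bigtheta by blast
    then have "eventually (\<lambda>y. y \<noteq> \<alpha> \<longrightarrow> f y \<noteq> 0) (nhds \<alpha>)" by (simp add: eventually_at_filter)
    from eventually_compose_filterlim[OF this tY]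
    have eY: "eventually (\<lambda>x. Y x \<noteq> \<alpha> \<longrightarrow> f (Y x) \<noteq> 0) F1" .
    from eG eY nzD1 show ?thesis
    proof eventually_elim
      case (elim x)
      show ?case
      proof
        assume zy: "Z x = Y x"
        then have "f (Y x) / D1 x * G (T x) = 0" by (simp add: Zeq)
        then have "f (Y x) = 0" using elim by simp
        then have "Y x = \<alpha>" using elim by blast
        then show "Z x = \<alpha>" using zy by simp
      qed
    qed
  qed
  obtain \<delta>1 where d1: "\<delta>1 > 0" "\<forall>x\<in>{x. W x \<noteq> \<alpha>}. x \<noteq> \<alpha> \<and> dist x \<alpha> < \<delta>1 \<longrightarrow> (Z x = Y x \<longrightarrow> Z x = \<alpha>)"
    using evZY unfolding F1_def eventually_at by blast
  obtain \<delta>2 c2 where d2: "\<delta>2 > 0" "c2 > 0" "\<forall>x\<in>{x. W x \<noteq> \<alpha> \<and> Z x \<noteq> Y x}. x \<noteq> \<alpha> \<and> \<bar>x - \<alpha>\<bar> < \<delta>2 \<longrightarrow> \<bar>St x - \<alpha>\<bar> \<le> c2 * \<bar>(x - \<alpha>)^8\<bar>"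
    using bigO_extract[OF St8[unfolded F2_def]] by blast
  have main: "\<forall>x. \<bar>x - \<alpha>\<bar> < min \<delta>1 \<delta>2 \<longrightarrow> \<bar>St x - \<alpha>\<bar> \<le> c2 * \<bar>x - \<alpha>\<bar>^8"
  proof (intro allI impI)
    fix x assume x: "\<bar>x - \<alpha>\<bar> < min \<delta>1 \<delta>2"
    have pos: "0 \<le> c2 * \<bar>x - \<alpha>\<bar>^8" using d2(2) by simp
    show "\<bar>St x - \<alpha>\<bar> \<le> c2 * \<bar>x - \<alpha>\<bar>^8"
    proof (cases "x = \<alpha> \<or> W x = \<alpha>")
      case True
      then have "St x = \<alpha>" using W_alpha x_alpha by blast
      then show ?thesis using pos by simp
    next
      case False
      show ?thesis
      proof (cases "Z x = Y x")
        case True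
        then have "Z x = \<alpha>" using d1(2) False x by (auto simp: dist_real_def)
        then have "St x = \<alpha>" using b0[OF True] by simp
        then show ?thesis using pos by simp
      next
        case Zf: False
        then have "\<bar>St x - \<alpha>\<bar> \<le> c2 * \<bar>(x - \<alpha>)^8\<bar>" using d2(3) False x Zf by auto
        then show ?thesis by (simp add: power_abs)
      qed
    qed
  qed
  have "min \<delta>1 \<delta>2 > 0" using d1 d2 by simp
  with main show ?thesis by blast
qed

end

lemma iter_conv:
  fixes g :: "real \<Rightarrow> real"
  assumes d: "\<delta> > 0" and hq: "\<forall>x. \<bar>x - \<alpha>\<bar> < \<delta> \<longrightarrow> \<bar>g x - \<alpha>\<bar> \<le> C * \<bar>x - \<alpha>\<bar>^2"
  shows "\<exists>\<delta>'>0. \<delta>' \<le> \<delta> \<and> (\<forall>x0. \<bar>x0 - \<alpha>\<bar> < \<delta>' \<longrightarrow> (\<forall>n. \<bar>(g ^^ n) x0 - \<alpha>\<bar> \<le> (1/2)^n * \<bar>x0 - \<alpha>\<bar>))"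
proof -
  define \<delta>' where "\<delta>' = min \<delta> (1 / (2 * (\<bar>C\<bar> + 1)))"
  have d': "\<delta>' > 0" "\<delta>' \<le> \<delta>" using d by (auto simp: \<delta>'_def)
  have half: "\<bar>g x - \<alpha>\<bar> \<le> \<bar>x - \<alpha>\<bar> / 2" if x: "\<bar>x - \<alpha>\<bar> < \<delta>'" for x
  proof -
    define e where "e = \<bar>x - \<alpha>\<bar>"
    have e0: "0 \<le> e" by (simp add: e_def)
    have "e < 1 / (2 * (\<bar>C\<bar> + 1))" using x by (simp add: \<delta>'_def e_def)
    then have "e * (2 * (\<bar>C\<bar> + 1)) < 1" by (simp add: field_simps)
    then have "2 * (\<bar>C\<bar> * e) + 2 * e < 1" by (simp add: algebra_simps)
    moreover have "0 \<le> 2 * e" using e0 by simp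
    ultimately have Ce: "\<bar>C\<bar> * e \<le> 1/2" by linarith
    have "\<bar>g x - \<alpha>\<bar> \<le> C * e^2" using hq x d' by (simp add: e_def)
    also have "\<dots> \<le> (\<bar>C\<bar> * e) * e"
    proof -
      have "C * (e * e) \<le> \<bar>C\<bar> * (e * e)" by (rule mult_right_mono) (auto simp: e0)
      then show ?thesis by (simp add: power2_eq_square mult.assoc)
    qed
    also have "\<dots> \<le> (1/2) * e" by (rule mult_right_mono[OF Ce e0])
    finally show ?thesis by (simp add: e_def)
  qed
  have "\<forall>x0. \<bar>x0 - \<alpha>\<bar> < \<delta>' \<longrightarrow> (\<forall>n. \<bar>(g ^^ n) x0 - \<alpha>\<bar> \<le> (1/2)^n * \<bar>x0 - \<alpha>\<bar>)"
  proof (intro allI impI)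
    fix x0 n assume x0: "\<bar>x0 - \<alpha>\<bar> < \<delta>'"
    show "\<bar>(g ^^ n) x0 - \<alpha>\<bar> \<le> (1/2)^n * \<bar>x0 - \<alpha>\<bar>"
    proof (induction n)
      case 0 then show ?case by simp
    next
      case (Suc n)
      have "(1/2::real)^n \<le> 1" by (simp add: power_le_one)
      then have "(1/2)^n * \<bar>x0 - \<alpha>\<bar> \<le> \<bar>x0 - \<alpha>\<bar>" by (simp add: mult_left_le_one_le)
      with Suc have "\<bar>(g ^^ n) x0 - \<alpha>\<bar> < \<delta>'" using x0 by linarith
      then have "\<bar>g ((g ^^ n) x0) - \<alpha>\<bar> \<le> \<bar>(g ^^ n) x0 - \<alpha>\<bar> / 2" by (rule half)
      also have "\<dots> \<le> (1/2)^n * \<bar>x0 - \<alpha>\<bar> / 2" using Suc by simp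
      finally show ?case by simp
    qed
  qed
  with d' show ?thesis by blast
qed

theorem theorem1:
  fixes D :: "real set" and f :: "real \<Rightarrow> real" and \<alpha> \<kappa> :: real
    and G H :: "real \<times> real \<Rightarrow> real"
  assumes "open D" and "is_interval D" and "\<alpha> \<in> D"
    and "smooth_real_on D f"
    and "f \<alpha> = 0" and "deriv f \<alpha> \<noteq> 0"
    and "\<kappa> \<noteq> 0"
    and "smooth2_near0 G" and "smooth2_near0 H"
  shows "(\<exists>\<delta>>0. \<forall>x0. \<bar>x0 - \<alpha>\<bar> < \<delta> \<longrightarrow> iterates \<kappa> f G H x0 \<longlonglongrightarrow> \<alpha>)
       \<and> ((G (0,0) = 1
           \<and> ((\<lambda>t. G (t,0)) has_real_derivative 1) (at 0)
           \<and> ((\<lambda>t. G (0,t)) has_real_derivative 1) (at 0)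
           \<and> H (0,0) = 1
           \<and> ((\<lambda>s. H (s,0)) has_real_derivative 0) (at 0)
           \<and> ((\<lambda>s. H (0,s)) has_real_derivative 0) (at 0))
          \<longrightarrow> (\<exists>\<delta>>0. \<forall>x0. \<bar>x0 - \<alpha>\<bar> < \<delta> \<longrightarrow>
                 (\<exists>C N. \<forall>n\<ge>N. \<bar>iterates \<kappa> f G H x0 (Suc n) - \<alpha>\<bar>
                                 \<le> C * \<bar>iterates \<kappa> f G H x0 n - \<alpha>\<bar> ^ 8)))"
proof -
  interpret I: iter_full D f \<alpha> \<kappa> G H
    using assms(1,3,4,5,6,7) by unfold_locales
  have it: "iterates \<kappa> f G H x0 n = (I.St ^^ n) x0" for x0 n
  proof -
    have "step \<kappa> f G H = I.St" using I.step_eq by (rule ext)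
    then show ?thesis by (simp add: iterates_def)
  qed
  obtain \<delta>1 C1 where p1: "\<delta>1 > 0" "\<forall>x. \<bar>x - \<alpha>\<bar> < \<delta>1 \<longrightarrow> \<bar>I.St x - \<alpha>\<bar> \<le> C1 * \<bar>x - \<alpha>\<bar>^2"
    using I.part1[OF assms(8,9)] by blast
  obtain \<delta>' where d': "\<delta>' > 0" "\<delta>' \<le> \<delta>1"
    "\<forall>x0. \<bar>x0 - \<alpha>\<bar> < \<delta>' \<longrightarrow> (\<forall>n. \<bar>(I.St ^^ n) x0 - \<alpha>\<bar> \<le> (1/2)^n * \<bar>x0 - \<alpha>\<bar>)"
    using iter_conv[OF p1] by blast
  have conv: "\<forall>x0. \<bar>x0 - \<alpha>\<bar> < \<delta>' \<longrightarrow> iterates \<kappa> f G H x0 \<longlonglongrightarrow> \<alpha>"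
  proof (intro allI impI)
    fix x0 assume x0: "\<bar>x0 - \<alpha>\<bar> < \<delta>'"
    have b: "\<forall>n. norm ((I.St ^^ n) x0 - \<alpha>) \<le> (1/2)^n * \<bar>x0 - \<alpha>\<bar>" using d'(3) x0 by simp
    have l: "(\<lambda>n. (1/2::real)^n) \<longlonglongrightarrow> 0" by (rule LIMSEQ_power_zero) simp
    have "(\<lambda>n. (1/2::real)^n * \<bar>x0 - \<alpha>\<bar>) \<longlonglongrightarrow> 0 * \<bar>x0 - \<alpha>\<bar>"
      by (rule tendsto_mult[OF l tendsto_const])
    then have l2: "(\<lambda>n. (1/2::real)^n * \<bar>x0 - \<alpha>\<bar>) \<longlonglongrightarrow> 0" by simp
    have "(\<lambda>n. (I.St ^^ n) x0 - \<alpha>) \<longlonglongrightarrow> 0"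
      by (rule Lim_null_comparison[OF always_eventually l2]) (use b in blast)
    then have "(\<lambda>n. (I.St ^^ n) x0) \<longlonglongrightarrow> \<alpha>" by (simp add: LIM_zero_iff)
    then show "iterates \<kappa> f G H x0 \<longlonglongrightarrow> \<alpha>" by (simp add: it[abs_def])
  qed
  have ord: "(\<exists>\<delta>>0. \<forall>x0. \<bar>x0 - \<alpha>\<bar> < \<delta> \<longrightarrow>
                 (\<exists>C N. \<forall>n\<ge>N. \<bar>iterates \<kappa> f G H x0 (Suc n) - \<alpha>\<bar>
                                 \<le> C * \<bar>iterates \<kappa> f G H x0 n - \<alpha>\<bar> ^ 8))"
    if hyp: "G (0,0) = 1
           \<and> ((\<lambda>t. G (t,0)) has_real_derivative 1) (at 0)
           \<and> ((\<lambda>t. G (0,t)) has_real_derivative 1) (at 0)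
           \<and> H (0,0) = 1
           \<and> ((\<lambda>s. H (s,0)) has_real_derivative 0) (at 0)
           \<and> ((\<lambda>s. H (0,s)) has_real_derivative 0) (at 0)"
  proof -
    obtain \<delta>8 C8 where p8: "\<delta>8 > 0" "\<forall>x. \<bar>x - \<alpha>\<bar> < \<delta>8 \<longrightarrow> \<bar>I.St x - \<alpha>\<bar> \<le> C8 * \<bar>x - \<alpha>\<bar>^8"
    proof -
      have "\<exists>\<delta>>0. \<exists>C. \<forall>x. \<bar>x - \<alpha>\<bar> < \<delta> \<longrightarrow> \<bar>I.St x - \<alpha>\<bar> \<le> C * \<bar>x - \<alpha>\<bar>^8"
      proof -
        from hyp have h1: "G (0,0) = 1" and h2: "((\<lambda>t. G (t,0)) has_real_derivative 1) (at 0)"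
          and h3: "((\<lambda>t. G (0,t)) has_real_derivative 1) (at 0)" and h4: "H (0,0) = 1"
          and h5: "((\<lambda>s. H (s,0)) has_real_derivative 0) (at 0)"
          and h6: "((\<lambda>s. H (0,s)) has_real_derivative 0) (at 0)" by auto
        show ?thesis by (rule I.part2[OF assms(8,9) h1 h2 h3 h4 h5 h6])
      qed
      then show ?thesis using that by blast
    qed
    have "\<forall>x0. \<bar>x0 - \<alpha>\<bar> < min \<delta>' \<delta>8 \<longrightarrow>
                 (\<exists>C N. \<forall>n\<ge>N. \<bar>iterates \<kappa> f G H x0 (Suc n) - \<alpha>\<bar>
                                 \<le> C * \<bar>iterates \<kappa> f G H x0 n - \<alpha>\<bar> ^ 8)"
    proof (intro allI impI)
      fix x0 assume x0: "\<bar>x0 - \<alpha>\<bar> < min \<delta>' \<delta>8"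
      have "\<forall>n\<ge>0. \<bar>iterates \<kappa> f G H x0 (Suc n) - \<alpha>\<bar> \<le> C8 * \<bar>iterates \<kappa> f G H x0 n - \<alpha>\<bar> ^ 8"
      proof (intro allI impI)
        fix n :: nat
        have "\<bar>(I.St ^^ n) x0 - \<alpha>\<bar> \<le> (1/2)^n * \<bar>x0 - \<alpha>\<bar>" using d'(3) x0 by simp
        moreover have "(1/2::real)^n \<le> 1" by (simp add: power_le_one)
        then have "(1/2)^n * \<bar>x0 - \<alpha>\<bar> \<le> \<bar>x0 - \<alpha>\<bar>" by (simp add: mult_left_le_one_le)
        ultimately have "\<bar>(I.St ^^ n) x0 - \<alpha>\<bar> < \<delta>8" using x0 by linarith
        then have "\<bar>I.St ((I.St ^^ n) x0) - \<alpha>\<bar> \<le> C8 * \<bar>(I.St ^^ n) x0 - \<alpha>\<bar>^8" using p8 by blast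
        then show "\<bar>iterates \<kappa> f G H x0 (Suc n) - \<alpha>\<bar> \<le> C8 * \<bar>iterates \<kappa> f G H x0 n - \<alpha>\<bar> ^ 8"
          by (simp add: it)
      qed
      then show "\<exists>C N. \<forall>n\<ge>N. \<bar>iterates \<kappa> f G H x0 (Suc n) - \<alpha>\<bar> \<le> C * \<bar>iterates \<kappa> f G H x0 n - \<alpha>\<bar> ^ 8"
        by blast
    qed
    moreover have "min \<delta>' \<delta>8 > 0" using d' p8 by simp
    ultimately show ?thesis by blast
  qed
  have c1: "\<exists>\<delta>>0. \<forall>x0. \<bar>x0 - \<alpha>\<bar> < \<delta> \<longrightarrow> iterates \<kappa> f G H x0 \<longlonglongrightarrow> \<alpha>"
    using conv d'(1) by blast
  show ?thesis by (rule conjI[OF c1 impI[OF ord]])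
qed

end
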